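(* Let $0<q<p\le1$, $n\in\mathbb{N}$, and for $x\in[0,1]$ let $\psi_i(t)=(t-x)^i$, $i=1,2$. Then for all $x\in[0,1]$, $$\widetilde{M}_{n,k}^{(p,q)}(\psi_1;x)\le \frac{p^n-q^nx}{q^2[n]_{p,q}}+\left(\frac1q-1\right)x,$$ $$\widetilde{M}_{n,k}^{(p,q)}(\psi_2;x)\le x^2\left(1-\frac{1}{q^2}+\frac{2(q+1)}{q^2[n]_{p,q}}\right)+\frac{(p+q)^2}{q^5}\frac{(p^n-q^nx)}{[n]_{p,q}}x+\frac{p(p+q)}{q^6}\frac{(p^n-q^nx)(p^{n-1}-q^{n-1}x)}{[n]_{p,q}[n-1]_{p,q}}.$$
   Context: For $0<q<p\le1$: $[n]_{p,q}=\frac{p^n-q^n}{p-q}$; $[n]_{p,q}!=[1]_{p,q}\cdots[n]_{p,q}$, $[0]_{p,q}!=1$; $\begin{bmatrix}n\\k\end{bmatrix}_{p,q}=\frac{[n]_{p,q}!}{[k]_{p,q}![n-k]_{p,q}!}$; $(x+y)_{p,q}^n=\prod_{j=0}^{n-1}(p^jx+q^jy)$. The $(p,q)$-integral is $\int_0^a f(t)\,d_{p,q}t=(p-q)a\sum_{j=0}^\infty \frac{q^j}{p^{j+1}}f\!\left(\frac{q^j}{p^{j+1}}a\right)$. Define $m_{n,k}^{(p,q)}(x)=\frac{1}{p^{kn+n(n+1)/2}}\begin{bmatrix}n+k\\k\end{bmatrix}_{p,q}x^k(1-x)^{n+1}_{p,q}$ and $b_{n,k}^{(p,q)}(qt)=\frac{1}{p^{k(n-1)+n(n-1)/2}}\begin{bmatrix}n+k+1\\k\end{bmatrix}_{p,q}(qt)^k(1-qt)^n_{p,q}$.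 The operator is $$\widetilde{M}_{n,k}^{(p,q)}(f;x)=\frac{[n+1]_{p,q}}{p^n}\sum_{k=0}^\infty m_{n,k}^{(p,q)}(x)\,(pq)^{-k}\int_0^1 b_{n,k}^{(p,q)}(qt)f(t)\,d_{p,q}t,\quad 0\le x<1,$$ and $\widetilde{M}_{n,k}^{(p,q)}(f;1)=f(1)$; here $\psi_i$ is applied as a function of $t$ with $x$ fixed. *)

theory Defs
  imports Complex_Main
begin

definition pq_int :: "real \<Rightarrow> real \<Rightarrow> nat \<Rightarrow> real" where
  "pq_int p q n = (p ^ n - q ^ n) / (p - q)"

definition pq_fact :: "real \<Rightarrow> real \<Rightarrow> nat \<Rightarrow> real" where
  "pq_fact p q n = (\<Prod>i\<in>{1..n}. pq_int p q i)"

definition pq_binom :: "real \<Rightarrow> real \<Rightarrow> nat \<Rightarrow> nat \<Rightarrow> real" where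
  "pq_binom p q n k = pq_fact p q n / (pq_fact p q k * pq_fact p q (n - k))"

definition pq_pow :: "real \<Rightarrow> real \<Rightarrow> real \<Rightarrow> real \<Rightarrow> nat \<Rightarrow> real" where
  "pq_pow p q x y n = (\<Prod>j<n. p ^ j * x + q ^ j * y)"

definition pq_integral :: "real \<Rightarrow> real \<Rightarrow> real \<Rightarrow> (real \<Rightarrow> real) \<Rightarrow> real" where
  "pq_integral p q a f =
     (p - q) * a * (\<Sum>j. q ^ j / p ^ (j + 1) * f (q ^ j / p ^ (j + 1) * a))"

definition m_basis :: "real \<Rightarrow> real \<Rightarrow> nat \<Rightarrow> nat \<Rightarrow> real \<Rightarrow> real" where
  "m_basis p q n k x =
     1 / p ^ (k * n + n * (n + 1) div 2) * pq_binom p q (n + k) k * x ^ k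
       * pq_pow p q 1 (- x) (n + 1)"

text \<open>b_{n,k}^{(p,q)}(qt)\<close>
definition b_basis :: "real \<Rightarrow> real \<Rightarrow> nat \<Rightarrow> nat \<Rightarrow> real \<Rightarrow> real" where
  "b_basis p q n k t =
     1 / p ^ (k * (n - 1) + n * (n - 1) div 2) * pq_binom p q (n + k + 1) k * (q * t) ^ k
       * pq_pow p q 1 (- (q * t)) n"

definition M_op :: "real \<Rightarrow> real \<Rightarrow> nat \<Rightarrow> (real \<Rightarrow> real) \<Rightarrow> real \<Rightarrow> real" where
  "M_op p q n f x =
     (if x = 1 then f 1
      else pq_int p q (n + 1) / p ^ n *
        (\<Sum>k. m_basis p q n k x * (1 / (p * q) ^ k)
               * pq_integral p q 1 (\<lambda>t. b_basis p q n k t * f t)))"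

end

theory Submission
  imports Defs
begin

definition qi :: "real \<Rightarrow> nat \<Rightarrow> real" where "qi r m = (1 - r^m)/(1-r)"
definition qf :: "real \<Rightarrow> nat \<Rightarrow> real" where "qf r m = (\<Prod>i\<in>{1..m}. qi r i)"
definition qb :: "real \<Rightarrow> nat \<Rightarrow> nat \<Rightarrow> real" where "qb r m k = qf r m / (qf r k * qf r (m-k))"
definition qp :: "real \<Rightarrow> real \<Rightarrow> nat \<Rightarrow> real" where "qp r z n = (\<Prod>j<n. 1 - r^j * z)"

lemma qi_pos: assumes "0<r" "r<1" "m \<ge> 1" shows "qi r m > 0"
proof -
  have "r^m < 1" using assms by (simp add: power_less_one_iff)
  then show ?thesis using assms by (simp add: qi_def)
qed

lemma qi_add: assumes "r \<noteq> 1" shows "qi r (m+n) = qi r m + r^m * qi r n"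
  using assms by (simp add: qi_def power_add field_simps)

lemma qf_0[simp]: "qf r 0 = 1" by (simp add: qf_def)
lemma qf_Suc: "qf r (Suc m) = qf r m * qi r (Suc m)"
  by (simp add: qf_def prod.nat_ivl_Suc')

lemma qf_pos: assumes "0<r" "r<1" shows "qf r m > 0"
  unfolding qf_def using qi_pos[OF assms] by (intro prod_pos) auto

lemma qb_nonneg: assumes "0<r" "r<1" shows "qb r m k \<ge> 0"
  using qf_pos[OF assms, of m] qf_pos[OF assms, of k] qf_pos[OF assms, of "m-k"] by (simp add: qb_def)

lemma qb_diag: assumes "0<r" "r<1" shows "qb r k k = 1"
  using qf_pos[OF assms, of k] by (simp add: qb_def)

lemma qb_zero: assumes "0<r" "r<1" shows "qb r m 0 = 1"
  using qf_pos[OF assms, of m] by (simp add: qb_def)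

lemma pascal:
  assumes "0<r" "r<1"
  shows "qb r (Suc n + Suc k) (Suc k) = qb r (Suc n + k) k + r^(Suc k) * qb r (n + Suc k) (Suc k)"
proof -
  have e1: "Suc n + Suc k = Suc (Suc (n+k))" by simp
  have A: "qb r (Suc n + Suc k) (Suc k) = qf r (Suc (n+k)) * qi r (Suc (Suc (n+k))) / (qf r k * qi r (Suc k) * (qf r n * qi r (Suc n)))"
    unfolding qb_def by (simp add: qf_Suc)
  have B: "qb r (Suc n + k) k = qf r (Suc (n+k)) / (qf r k * (qf r n * qi r (Suc n)))"
    unfolding qb_def by (simp add: qf_Suc)
  have C: "qb r (n + Suc k) (Suc k) = qf r (Suc (n+k)) / (qf r k * qi r (Suc k) * qf r n)"
    unfolding qb_def by (simp add: qf_Suc)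
  have key: "qi r (Suc (Suc (n+k))) = qi r (Suc k) + r^(Suc k) * qi r (Suc n)"
    using qi_add[of r "Suc k" "Suc n"] assms by (simp add: add.commute)
  have p1: "qf r k > 0" "qf r n > 0" "qf r (Suc (n+k)) > 0" using qf_pos[OF assms] by auto
  have p2: "qi r (Suc k) > 0" "qi r (Suc n) > 0" using qi_pos[OF assms] by auto
  show ?thesis unfolding A B C key using p1 p2 by (simp add: field_simps)
qed

lemma qp_Suc_shift: "qp r z (Suc n) = (1 - z) * qp r (r*z) n"
  unfolding qp_def by (subst prod.lessThan_Suc_shift) (simp add: ac_simps)

lemma qp_Suc: "qp r z (Suc n) = qp r z n * (1 - r^n * z)"
  unfolding qp_def by simp

lemma qp_pos: assumes "0<r" "r \<le> 1" "0 \<le> z" "z < 1" shows "qp r z n > 0"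
  unfolding qp_def
proof (intro prod_pos ballI)
  fix j assume "j \<in> {..<n}"
  have "r^j \<le> 1" using assms by (simp add: power_le_one)
  then have "r^j * z \<le> z" using assms by (simp add: mult_left_le_one_le)
  then show "0 < 1 - r^j * z" using assms by simp
qed

lemma negbin:
  assumes r: "0<r" "r<1"
  shows "0 \<le> z \<Longrightarrow> z < 1 \<Longrightarrow> (\<lambda>k. qb r (n+k) k * z^k) sums (1 / qp r z (Suc n))"
proof (induction n arbitrary: z)
  case 0
  have "(\<lambda>k. z^k) sums (1/(1-z))" using 0 by (intro geometric_sums) simp
  then show ?case using qb_diag[OF r] by (simp add: qp_def)
next
  case (Suc n)
  define a where "a k = qb r (Suc n + k) k * z^k" for k
  define g where "g k = qb r (n+k) k * (r*z)^k" for k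
  have rz: "0 \<le> r*z" using Suc.prems r by simp
  have rz2: "r*z < 1" using Suc.prems r
    by (metis mult_le_one less_eq_real_def order.strict_trans1 mult_less_cancel_left1 not_le)
  have IH: "g sums (1 / qp r (r*z) (Suc n))" unfolding g_def using Suc.IH[OF rz(1) rz2] .
  define S' where "S' = 1 / qp r (r*z) (Suc n)"
  have rec: "a (Suc k) = z * a k + g (Suc k)" for k
    unfolding a_def g_def using pascal[OF r, of n k] by (simp add: algebra_simps power_mult_distrib)
  have a0: "a 0 = 1" "g 0 = 1" unfolding a_def g_def using qb_zero[OF r] by auto
  have anonneg: "a k \<ge> 0" for k unfolding a_def using qb_nonneg[OF r] Suc.prems by simp
  have gnonneg: "g k \<ge> 0" for k unfolding g_def using qb_nonneg[OF r] rz by simp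
  have ps: "(1-z) * (\<Sum>k<Suc K. a k) = (\<Sum>k<Suc K. g k) - z * a K" for K
  proof (induction K)
    case 0 then show ?case using a0 by simp
  next
    case (Suc K)
    have "(1-z) * (\<Sum>k<Suc (Suc K). a k) = (1-z) * (\<Sum>k<Suc K. a k) + (1-z) * a (Suc K)" by (simp add: algebra_simps)
    also have "\<dots> = ((\<Sum>k<Suc K. g k) - z * a K) + (1-z)*(z * a K + g (Suc K))" using Suc.IH rec[of K] by simp
    also have "\<dots> = (\<Sum>k<Suc (Suc K). g k) - z * (z * a K + g (Suc K))" by (simp add: algebra_simps)
    also have "\<dots> = (\<Sum>k<Suc (Suc K). g k) - z * a (Suc K)" using rec[of K] by simp
    finally show ?case .
  qed
  have gle: "(\<Sum>k<K. g k) \<le> S'" for K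
  proof -
    have "(\<Sum>k<K. g k) \<le> suminf g" using IH gnonneg by (intro sum_le_suminf) (auto simp: sums_iff)
    then show ?thesis using IH unfolding S'_def by (simp add: sums_iff)
  qed
  have ale: "(\<Sum>k<K. a k) \<le> S' / (1-z)" for K
  proof (cases K)
    case 0 
    have "0 \<le> S'" using gle[of 0] by simp
    then show ?thesis using 0 Suc.prems by simp
  next
    case (Suc K')
    have "(1-z) * (\<Sum>k<K. a k) \<le> S'" using ps[of K'] gle[of K] anonneg[of K'] Suc.prems Suc
      by (smt (verit) mult_nonneg_nonneg)
    then show ?thesis using Suc.prems by (simp add: field_simps mult.commute)
  qed
  have summ: "summable a" by (rule summableI_nonneg_bounded[OF anonneg ale])
  define S where "S = suminf a"
  have aS: "a sums S" using summ by (simp add: S_def summable_sums)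
  have sh: "(\<lambda>k. a (Suc k)) sums (S - 1)"
    using aS sums_iff_shift[of a 1 "S - 1"] a0 by simp
  have sh2: "(\<lambda>k. a (Suc k)) sums (z * S + (S' - 1))"
  proof -
    have "(\<lambda>k. g (Suc k)) sums (S' - 1)" using IH sums_iff_shift[of g 1 "S' - 1"] a0 S'_def by simp
    then have "(\<lambda>k. z * a k + g (Suc k)) sums (z * S + (S' - 1))"
      by (intro sums_add sums_mult aS)
    then show ?thesis using rec by simp
  qed
  have "S - 1 = z * S + (S' - 1)" using sums_unique2[OF sh sh2] .
  then have "S = S' / (1 - z)" using Suc.prems by (simp add: field_simps)
  also have "\<dots> = 1 / qp r z (Suc (Suc n))"
    unfolding S'_def using qp_Suc_shift[of r z "Suc n"] by simp
  finally show ?case using aS unfolding a_def by simp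
qed

lemma beta_sums:
  assumes r: "0<r" "r<1"
  shows "(\<lambda>j. r^(j*(m+1)) * qp r (r^(j+1)) n) sums (qf r m * qf r n / (qf r (m+n+1) * (1-r)))"
proof (induction n arbitrary: m)
  case 0
  have "(\<lambda>j. (r^(m+1))^j) sums (1/(1-r^(m+1)))"
  proof (intro geometric_sums)
    have "r^(m+1) < 1" using r power_less_one_iff[of r "m+1"] by linarith
    moreover have "0 \<le> r^(m+1)" using r by simp
    ultimately show "norm (r^(m+1)) < 1" by simp
  qed
  moreover have "1/(1-r^(m+1)) = qf r m * qf r 0 / (qf r (m+0+1) * (1-r))"
    using qf_pos[OF r, of m] r by (simp add: qf_Suc qi_def)
  moreover have "(\<lambda>j. r^(j*(m+1)) * qp r (r^(j+1)) 0) = (\<lambda>j. (r^(m+1))^j)"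
  proof (rule ext)
    fix j
    have "r^(j*(m+1)) = (r^(m+1))^j" by (metis mult.commute power_mult)
    then show "r^(j*(m+1)) * qp r (r^(j+1)) 0 = (r^(m+1))^j" by (simp add: qp_def)
  qed
  ultimately show ?case by simp
next
  case (Suc n)
  have t: "r^(j*(m+1)) * qp r (r^(j+1)) (Suc n) =
      r^(j*(m+1)) * qp r (r^(j+1)) n - r^(n+1) * (r^(j*(Suc m+1)) * qp r (r^(j+1)) n)" for j
  proof -
    have "r^(j*(m+1)) * (r^n * r^(j+1)) = r^(n+1) * r^(j*(Suc m+1))"
      by (simp flip: power_add add: algebra_simps)
    moreover have gen: "\<And>A B X::real. A * (B * (1 - X)) = A*B - (A*X)*B" by (simp add: algebra_simps)
    ultimately show ?thesis unfolding qp_Suc by (metis mult.assoc)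
  qed
  have s: "(\<lambda>j. r^(j*(m+1)) * qp r (r^(j+1)) n - r^(n+1) * (r^(j*(Suc m+1)) * qp r (r^(j+1)) n))
     sums (qf r m * qf r n / (qf r (m+n+1) * (1-r)) - r^(n+1) * (qf r (Suc m) * qf r n / (qf r (Suc m+n+1) * (1-r))))"
    by (intro sums_diff sums_mult Suc.IH)
  have key: "qi r (Suc (Suc (m+n))) = qi r (Suc n) + r^(Suc n) * qi r (Suc m)"
    using qi_add[of r "Suc n" "Suc m"] r by (simp add: add.commute)
  have p: "qf r m > 0" "qf r n > 0" "qf r (Suc (m+n)) > 0" "qi r (Suc m) > 0" "qi r (Suc n) > 0" 
      "qi r (Suc (Suc (m+n))) > 0"
    using qf_pos[OF r] qi_pos[OF r] by auto
  have e: "qf r m * qf r n / (qf r (m+n+1) * (1-r)) - r^(n+1) * (qf r (Suc m) * qf r n / (qf r (Suc m+n+1) * (1-r)))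
     = qf r m * qf r (Suc n) / (qf r (m + Suc n + 1) * (1-r))"
  proof -
    have A: "qf r (Suc m + n + 1) = qf r (Suc (m+n)) * qi r (Suc (Suc (m+n)))" by (simp add: qf_Suc)
    have B: "qf r (m + Suc n + 1) = qf r (Suc (m+n)) * qi r (Suc (Suc (m+n)))" by (simp add: qf_Suc)
    have aux0: "\<And>Q K d t c a b::real. Q \<noteq> 0 \<Longrightarrow> K \<noteq> 0 \<Longrightarrow> d \<noteq> 0 \<Longrightarrow>
       a*b/(Q*d) - t*(a*c*b/(Q*K*d)) = a*(b*(K - t*c))/(Q*K*d)"
      by (simp add: field_simps)
    have aux: "\<And>Q K d e t c a b::real. Q \<noteq> 0 \<Longrightarrow> K \<noteq> 0 \<Longrightarrow> d \<noteq> 0 \<Longrightarrow> K = e + t*c \<Longrightarrow>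
       a*b/(Q*d) - t*(a*c*b/(Q*K*d)) = a*(b*e)/(Q*K*d)"
      using aux0 by fastforce
    have C: "qf r (m+n+1) = qf r (Suc (m+n))" by simp
    show ?thesis unfolding A B C qf_Suc[of r m] qf_Suc[of r n]
      by (rule aux) (use p r key in auto)
  qed
  show ?case using s unfolding t[symmetric] e .
qed

definition T :: "nat \<Rightarrow> nat" where "T m = (\<Sum>i<m. i)"

lemma T_Suc: "T (Suc m) = T m + m" by (simp add: T_def)
lemma T_add: "T (k + l) = T k + T l + k * l"
  by (induction l) (simp_all add: T_def algebra_simps)
lemma T_div: "T m = m * (m - 1) div 2"
proof -
  have "2 * T m = m * (m - 1)"
  proof (induction m)
    case 0 show ?case by (simp add: T_def)
  next
    case (Suc m) then show ?case by (cases m) (simp_all add: T_Suc algebra_simps)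
  qed
  then show ?thesis by simp
qed

context
  fixes p r :: real
  assumes p: "0 < p" and r: "0 < r" "r < 1"
begin

lemma pq_int_conv: "pq_int p (r*p) m = p^(m-1) * qi r m"
proof (cases m)
  case 0 then show ?thesis by (simp add: pq_int_def qi_def)
next
  case (Suc m')
  have "p - r*p = p*(1-r)" by (simp add: algebra_simps)
  then show ?thesis using p r Suc
    by (simp add: pq_int_def qi_def power_mult_distrib field_simps)
qed

lemma pq_fact_conv: "pq_fact p (r*p) m = p^(T m) * qf r m"
proof (induction m)
  case 0 then show ?case by (simp add: pq_fact_def T_def)
next
  case (Suc m)
  have "pq_fact p (r*p) (Suc m) = pq_fact p (r*p) m * pq_int p (r*p) (Suc m)"
    by (simp add: pq_fact_def prod.nat_ivl_Suc')
  also have "\<dots> = p^(T (Suc m)) * qf r (Suc m)"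
    using Suc by (simp add: pq_int_conv qf_Suc T_Suc power_add)
  finally show ?case .
qed

lemma pq_binom_conv: "pq_binom p (r*p) (k+l) k = p^(k*l) * qb r (k+l) k"
proof -
  have "pq_binom p (r*p) (k+l) k = p^(T k + T l + k*l) * qf r (k+l) / (p^(T k) * qf r k * (p^(T l) * qf r l))"
    by (simp add: pq_binom_def pq_fact_conv T_add)
  also have "\<dots> = p^(k*l) * qb r (k+l) k"
    using p qf_pos[OF r] by (simp add: qb_def power_add)
  finally show ?thesis .
qed

lemma pq_pow_conv: "pq_pow p (r*p) 1 (-z) m = p^(T m) * qp r z m"
proof -
  have "pq_pow p (r*p) 1 (-z) m = (\<Prod>j<m. p^j * (1 - r^j * z))"
    unfolding pq_pow_def by (intro prod.cong) (auto simp: power_mult_distrib algebra_simps)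
  also have "\<dots> = (\<Prod>j<m. p^j) * qp r z m" by (simp add: qp_def prod.distrib)
  also have "(\<Prod>j<m. p^j) = p^(T m)" by (simp add: T_def power_sum)
  finally show ?thesis .
qed

lemma m_basis_conv: "m_basis p (r*p) n k x = qb r (n+k) k * x^k * qp r x (Suc n)"
proof -
  have e: "n * (n+1) div 2 = T (Suc n)" by (simp add: T_div)
  have "m_basis p (r*p) n k x = 1 / p^(k*n + T (Suc n)) * (p^(k*n) * qb r (k+n) k) * x^k * (p^(T (Suc n)) * qp r x (Suc n))"
    unfolding m_basis_def e using pq_binom_conv[of k n] pq_pow_conv[of x "Suc n"] by (simp add: add.commute)
  also have "\<dots> = qb r (n+k) k * x^k * qp r x (Suc n)"
    using p by (simp add: power_add add.commute)
  finally show ?thesis .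
qed

lemma b_basis_conv:
  assumes "n \<ge> 1"
  shows "b_basis p (r*p) n k (r^j/p) = p^(2*k) * qb r (n+k+1) k * r^(k*(j+1)) * qp r (r^(j+1)) n"
proof -
  have e: "n * (n-1) div 2 = T n" by (simp add: T_div)
  have e2: "k*(n+1) = k*(n-1) + 2*k" using assms by (cases n) auto
  have qt: "r*p*(r^j/p) = r^(j+1)" using p by simp
  have "b_basis p (r*p) n k (r^j/p) = 1 / p^(k*(n-1) + T n) * (p^(k*(n+1)) * qb r (k+(n+1)) k) * (r^(j+1))^k * (p^(T n) * qp r (r^(j+1)) n)"
    unfolding b_basis_def e qt using pq_binom_conv[of k "n+1"] pq_pow_conv[of "r^(j+1)" n]
    by (simp add: add.commute add.left_commute)
  also have "\<dots> = p^(2*k) * qb r (n+k+1) k * r^(k*(j+1)) * qp r (r^(j+1)) n"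
    unfolding e2 using p by (simp add: power_add power_mult power_mult_distrib mult.commute add.commute add.left_commute)
  finally show ?thesis .
qed

lemma pq_integral_conv:
  assumes "(\<lambda>j. r^j * g (r^j/p)) sums S"
  shows "pq_integral p (r*p) 1 g = (1-r) * S"
proof -
  have "(\<lambda>j. (1/p) * (r^j * g (r^j/p))) sums ((1/p) * S)" by (rule sums_mult[OF assms])
  moreover have "(\<lambda>j. (r*p)^j / p^(j+1) * g ((r*p)^j / p^(j+1) * 1)) = (\<lambda>j. (1/p) * (r^j * g (r^j/p)))"
    using p by (auto simp: power_mult_distrib)
  ultimately have "(\<lambda>j. (r*p)^j / p^(j+1) * g ((r*p)^j / p^(j+1) * 1)) sums ((1/p) * S)" by simp
  then have "suminf (\<lambda>j. (r*p)^j / p^(j+1) * g ((r*p)^j / p^(j+1) * 1)) = S/p" by (simp add: sums_iff)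
  then show ?thesis unfolding pq_integral_def using p by (simp add: algebra_simps)
qed

end

definition Gf :: "real \<Rightarrow> real \<Rightarrow> real" where "Gf a y = (1-y)/(1-a*y)"
definition Hf :: "real \<Rightarrow> real \<Rightarrow> real \<Rightarrow> real" where "Hf a r y = (1-y)*(1-r*y)/((1-a*y)*(1-a*r*y))"

context
  fixes p r :: real and n :: nat
  assumes p: "0 < p" and r: "0 < r" "r < 1" and n: "n \<ge> 1"
begin

definition J :: "nat \<Rightarrow> real" where "J m = qf r m * qf r n / (qf r (m+n+1) * (1-r))"

lemma integral_poly:
  "pq_integral p (r*p) 1 (\<lambda>t. b_basis p (r*p) n k t * (\<alpha> + \<beta>*t + \<gamma>*t^2))
     = (1-r) * (p^(2*k) * r^k * qb r (n+k+1) k * (\<alpha> * J k + \<beta>/p * J (k+1) + \<gamma>/p^2 * J (k+2)))"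
proof (rule pq_integral_conv[OF p r])
  define C where "C = p^(2*k) * r^k * qb r (n+k+1) k"
  define Q where "Q j = qp r (r^(j+1)) n" for j
  have B: "\<And>m. (\<lambda>j. r^(j*(m+1)) * Q j) sums J m" unfolding J_def Q_def using beta_sums[OF r] by simp
  have S: "(\<lambda>j. C * (\<alpha> * (r^(j*(k+1)) * Q j) + \<beta>/p * (r^(j*(k+1+1)) * Q j) + \<gamma>/p^2 * (r^(j*(k+2+1)) * Q j)))
        sums (C * (\<alpha> * J k + \<beta>/p * J (k+1) + \<gamma>/p^2 * J (k+2)))"
    by (intro sums_mult sums_add B)
  have eq: "r^j * (b_basis p (r*p) n k (r^j/p) * (\<alpha> + \<beta>*(r^j/p) + \<gamma>*(r^j/p)^2))
     = C * (\<alpha> * (r^(j*(k+1)) * Q j) + \<beta>/p * (r^(j*(k+1+1)) * Q j) + \<gamma>/p^2 * (r^(j*(k+2+1)) * Q j))" for j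
  proof -
    have e1: "r^j * r^(k*(j+1)) = r^k * r^(j*(k+1))" by (simp flip: power_add add: algebra_simps)
    have e2: "r^j * r^(k*(j+1)) * r^j = r^k * r^(j*(k+1+1))" by (simp flip: power_add add: algebra_simps)
    have e3: "r^j * r^(k*(j+1)) * (r^j)^2 = r^k * r^(j*(k+2+1))"
    proof -
      have a1: "(r^j)^2 = r^(j*2)" by (simp add: power_mult)
      have a2: "j + k*(j+1) + j*2 = k + j*(k+2+1)" by (simp add: algebra_simps)
      have "r^j * r^(k*(j+1)) * (r^j)^2 = r^(j + k*(j+1) + j*2)" unfolding a1 by (simp only: power_add)
      also have "\<dots> = r^k * r^(j*(k+2+1))" unfolding a2 by (simp only: power_add)
      finally show ?thesis .
    qed
    have aux: "\<And>R w1 w2 w3 A B P q Q. R*w1 = A*B \<Longrightarrow> R*w2 = A*B*A \<Longrightarrow> R*w3 = A*B*A^2 \<Longrightarrow>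
      A * (P*q*B*Q*(\<alpha> + \<beta>*(A/p) + \<gamma>*(A/p)^2)) = P*R*q*(\<alpha>*(w1*Q) + \<beta>/p*(w2*Q) + \<gamma>/p^2*(w3*Q))"
    proof -
      fix R w1 w2 w3 A B P q Q :: real
      assume h: "R*w1 = A*B" "R*w2 = A*B*A" "R*w3 = A*B*A^2"
      have "P*R*q*(\<alpha>*(w1*Q) + \<beta>/p*(w2*Q) + \<gamma>/p^2*(w3*Q)) = P*q*(\<alpha>*((R*w1)*Q) + \<beta>/p*((R*w2)*Q) + \<gamma>/p^2*((R*w3)*Q))"
        by (simp add: algebra_simps)
      also have "\<dots> = A * (P*q*B*Q*(\<alpha> + \<beta>*(A/p) + \<gamma>*(A/p)^2))" unfolding h
        by (simp add: algebra_simps power2_eq_square)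
      finally show "A * (P*q*B*Q*(\<alpha> + \<beta>*(A/p) + \<gamma>*(A/p)^2)) = P*R*q*(\<alpha>*(w1*Q) + \<beta>/p*(w2*Q) + \<gamma>/p^2*(w3*Q))" by (rule sym)
    qed
    show ?thesis unfolding b_basis_conv[OF p r n] C_def Q_def
      by (rule aux) (use e1 e2 e3 in auto)
  qed
  show "(\<lambda>j. r^j * (b_basis p (r*p) n k (r^j/p) * (\<alpha> + \<beta>*(r^j/p) + \<gamma>*(r^j/p)^2)))
     sums (p^(2*k) * r^k * qb r (n+k+1) k * (\<alpha> * J k + \<beta>/p * J (k+1) + \<gamma>/p^2 * J (k+2)))"
    unfolding eq using S unfolding C_def .
qed

lemma qi_ratio: "qi r m / qi r l = (1 - r^m)/(1 - r^l)"
  using r by (simp add: qi_def)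

lemma qb_n1: "qb r (n+k+1) k = qf r (n+k+1) / (qf r k * (qf r n * qi r (n+1)))"
proof -
  have e: "n+k+1-k = Suc n" by simp
  show ?thesis unfolding qb_def e by (simp add: qf_Suc)
qed

lemma J0: "J k = qf r k * qf r n / (qf r (n+k+1) * (1-r))"
  unfolding J_def by (simp add: add.commute add.left_commute)
lemma J1: "J (k+1) = (qf r k * qi r (k+1)) * qf r n / ((qf r (n+k+1) * qi r (n+k+2)) * (1-r))"
proof -
  have "qf r (k+1+n+1) = qf r (n+k+1) * qi r (n+k+2)"
    by (metis add_Suc_right add.commute add.left_commute qf_Suc add_2_eq_Suc' Suc_eq_plus1)
  then show ?thesis unfolding J_def by (simp add: qf_Suc)
qed
lemma J2: "J (k+2) = (qf r k * qi r (k+1) * qi r (k+2)) * qf r n / ((qf r (n+k+1) * qi r (n+k+2) * qi r (n+k+3)) * (1-r))"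
proof -
  have "qf r (k+2+n+1) = qf r (n+k+1) * qi r (n+k+2) * qi r (n+k+3)"
  proof -
    have a: "k+2+n+1 = Suc (Suc (n+k+1))" by simp
    have b: "n+k+2 = Suc (n+k+1)" "n+k+3 = Suc (Suc (n+k+1))" by simp_all
    show ?thesis unfolding a b by (simp only: qf_Suc)
  qed
  moreover have "qf r (k+2) = qf r k * qi r (k+1) * qi r (k+2)"
  proof -
    have a: "k+2 = Suc (Suc k)" "k+1 = Suc k" by simp_all
    show ?thesis unfolding a by (simp only: qf_Suc)
  qed
  ultimately show ?thesis unfolding J_def by simp
qed

lemma norm_pos: "qf r k > 0" "qf r n > 0" "qf r (n+k+1) > 0" "qi r (n+1) > 0" "qi r (k+1) > 0" "qi r (n+k+2) > 0"
     "qi r (k+2) > 0" "qi r (n+k+3) > 0" "1 - r > 0"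
  using qf_pos[OF r] qi_pos[OF r] r by auto

lemma qi_nz: "m \<ge> 1 \<Longrightarrow> qi r m \<noteq> 0" using qi_pos[OF r] by (metis less_irrefl)
lemma qf_nz: "qf r m \<noteq> 0" using qf_pos[OF r] by (metis less_irrefl)

lemma norm0: "qi r (n+1) * (1-r) * qb r (n+k+1) k * J k = 1"
proof -
  have aux: "\<And>F K N I d::real. F\<noteq>0 \<Longrightarrow> K\<noteq>0 \<Longrightarrow> N\<noteq>0 \<Longrightarrow> I\<noteq>0 \<Longrightarrow> d\<noteq>0 \<Longrightarrow>
    I*d*(F/(K*(N*I)))*(K*N/(F*d)) = 1" by (simp add: field_simps)
  show ?thesis unfolding qb_n1 J0 by (rule aux) (use r in \<open>simp_all add: qi_nz qf_nz\<close>)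
qed

lemma norm1: "qi r (n+1) * (1-r) * qb r (n+k+1) k * J (k+1) = Gf (r^(n+1)) (r^(k+1))"
proof -
  have aux: "\<And>F K N I d Ik Im::real. F\<noteq>0 \<Longrightarrow> K\<noteq>0 \<Longrightarrow> N\<noteq>0 \<Longrightarrow> I\<noteq>0 \<Longrightarrow> d\<noteq>0 \<Longrightarrow> Im \<noteq> 0 \<Longrightarrow>
    I*d*(F/(K*(N*I)))*((K*Ik)*N/((F*Im)*d)) = Ik/Im" by (simp add: field_simps)
  have "qi r (n+1) * (1-r) * qb r (n+k+1) k * J (k+1) = qi r (k+1) / qi r (n+k+2)"
    unfolding qb_n1 J1 by (rule aux) (use r in \<open>simp_all add: qi_nz qf_nz\<close>)
  also have "\<dots> = Gf (r^(n+1)) (r^(k+1))" unfolding qi_ratio Gf_def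
    by (simp add: power_add[symmetric] add.commute add.left_commute)
  finally show ?thesis .
qed

lemma norm2: "qi r (n+1) * (1-r) * qb r (n+k+1) k * J (k+2) = Hf (r^(n+1)) r (r^(k+1))"
proof -
  have aux: "\<And>F K N I d Ik Im Ik2 Im3::real. F\<noteq>0 \<Longrightarrow> K\<noteq>0 \<Longrightarrow> N\<noteq>0 \<Longrightarrow> I\<noteq>0 \<Longrightarrow> d\<noteq>0 \<Longrightarrow> Im \<noteq> 0 \<Longrightarrow> Im3 \<noteq> 0 \<Longrightarrow>
    I*d*(F/(K*(N*I)))*((K*Ik*Ik2)*N/((F*Im*Im3)*d)) = (Ik/Im)*(Ik2/Im3)" by (simp add: field_simps)
  have "qi r (n+1) * (1-r) * qb r (n+k+1) k * J (k+2) = (qi r (k+1) / qi r (n+k+2)) * (qi r (k+2) / qi r (n+k+3))"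
    unfolding qb_n1 J2 by (rule aux) (use r in \<open>simp_all add: qi_nz qf_nz\<close>)
  also have "\<dots> = Hf (r^(n+1)) r (r^(k+1))"
  proof -
    have a: "n+k+2 = (n+1)+(k+1)" "n+k+3 = (n+1)+1+(k+1)" "k+2 = 1+(k+1)" by simp_all
    have b: "r^(n+k+2) = r^(n+1)*r^(k+1)" "r^(n+k+3) = r^(n+1)*r*r^(k+1)" "r^(k+2) = r*r^(k+1)"
      unfolding a by (simp_all only: power_add power_one_right)
    show ?thesis unfolding qi_ratio Hf_def b by simp
  qed
  finally show ?thesis .
qed

lemma term_poly:
  "qi r (n+1) * (m_basis p (r*p) n k x * (1/(p*(r*p))^k) * pq_integral p (r*p) 1 (\<lambda>t. b_basis p (r*p) n k t * (\<alpha> + \<beta>*t + \<gamma>*t^2)))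
   = (qb r (n+k) k * x^k * qp r x (Suc n)) * (\<alpha> + \<beta>/p * Gf (r^(n+1)) (r^(k+1)) + \<gamma>/p^2 * Hf (r^(n+1)) r (r^(k+1)))"
proof -
  define W where "W = qi r (n+1) * (1-r) * qb r (n+k+1) k"
  have pk: "(p*(r*p))^k = p^(2*k) * r^k" by (simp add: power_mult_distrib power_mult power2_eq_square mult.commute mult.left_commute)
  have pos: "p^(2*k) * r^k \<noteq> 0" using p r by simp
  have "qi r (n+1) * (m_basis p (r*p) n k x * (1/(p*(r*p))^k) * pq_integral p (r*p) 1 (\<lambda>t. b_basis p (r*p) n k t * (\<alpha> + \<beta>*t + \<gamma>*t^2)))
     = m_basis p (r*p) n k x * (\<alpha> * (W * J k) + \<beta>/p * (W * J (k+1)) + \<gamma>/p^2 * (W * J (k+2)))"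
    unfolding integral_poly pk W_def using pos by (simp add: field_simps)
  also have "\<dots> = (qb r (n+k) k * x^k * qp r x (Suc n)) * (\<alpha> + \<beta>/p * Gf (r^(n+1)) (r^(k+1)) + \<gamma>/p^2 * Hf (r^(n+1)) r (r^(k+1)))"
    unfolding W_def norm0 norm1 norm2 m_basis_conv[OF p r] by simp
  finally show ?thesis .
qed

end

lemma one_minus_pos: fixes a y :: real assumes "0 \<le> a" "a < 1" "0 \<le> y" "y \<le> 1" shows "1 - a*y > 0"
proof -
  have "a*y \<le> a" using assms by (intro mult_right_le_one_le) auto
  then show ?thesis using assms by linarith
qed

lemma G_tangent:
  fixes a y y0 :: real
  assumes "0 < a" "a < 1" "0 \<le> y" "y \<le> 1" "0 \<le> y0" "y0 \<le> 1"
  shows "Gf a y \<le> Gf a y0 - (1-a)/(1-a*y0)^2 * (y - y0)"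
proof -
  have d1: "1 - a*y > 0" "1 - a*y0 > 0" using assms one_minus_pos by auto
  have eq: "Gf a y0 - (1-a)/(1-a*y0)^2 * (y - y0) - Gf a y = a*(1-a)*(y-y0)^2/((1-a*y)*(1-a*y0)^2)"
  proof -
    define A where "A = 1 - a*y"
    define B where "B = 1 - a*y0"
    have n: "A \<noteq> 0" "B \<noteq> 0" using d1 by (auto simp: A_def B_def)
    have fr: "(1-y0)/B - (1-a)/B^2 * (y-y0) - (1-y)/A = ((1-y0)*A*B - (1-a)*(y-y0)*A - (1-y)*B^2)/(A*B^2)"
      using n by (simp add: field_simps power2_eq_square)
    have num: "(1-y0)*A*B - (1-a)*(y-y0)*A - (1-y)*B^2 = a*(1-a)*(y-y0)^2"
      unfolding A_def B_def by (simp add: algebra_simps power2_eq_square)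
    show ?thesis unfolding Gf_def A_def[symmetric] B_def[symmetric] fr num ..
  qed
  have "a*(1-a)*(y-y0)^2/((1-a*y)*(1-a*y0)^2) \<ge> 0" using assms d1 by simp
  then show ?thesis using eq by linarith
qed

definition ff :: "real \<Rightarrow> real \<Rightarrow> real" where "ff a y = y*(1-y)/(1-a*y)"

lemma f_tangent:
  fixes a y y0 :: real
  assumes "0 < a" "a < 1" "0 \<le> y" "y \<le> 1" "0 \<le> y0" "y0 \<le> 1"
  shows "ff a y \<le> ff a y0 + (1 - 2*y0 + a*y0^2)/(1-a*y0)^2 * (y - y0)"
proof -
  have d1: "1 - a*y > 0" "1 - a*y0 > 0" using assms one_minus_pos by auto
  have eq: "ff a y0 + (1 - 2*y0 + a*y0^2)/(1-a*y0)^2 * (y - y0) - ff a y = (1-a)*(y-y0)^2/((1-a*y)*(1-a*y0)^2)"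
  proof -
    define A where "A = 1 - a*y"
    define B where "B = 1 - a*y0"
    have n: "A \<noteq> 0" "B \<noteq> 0" using d1 by (auto simp: A_def B_def)
    have fr: "y0*(1-y0)/B + (1 - 2*y0 + a*y0^2)/B^2 * (y-y0) - y*(1-y)/A
       = (y0*(1-y0)*A*B + (1 - 2*y0 + a*y0^2)*(y-y0)*A - y*(1-y)*B^2)/(A*B^2)"
      using n by (simp add: field_simps power2_eq_square)
    have num: "y0*(1-y0)*A*B + (1 - 2*y0 + a*y0^2)*(y-y0)*A - y*(1-y)*B^2 = (1-a)*(y-y0)^2"
      unfolding A_def B_def by (simp add: algebra_simps power2_eq_square)
    show ?thesis unfolding ff_def A_def[symmetric] B_def[symmetric] fr num ..
  qed
  have "(1-a)*(y-y0)^2/((1-a*y)*(1-a*y0)^2) \<ge> 0" using assms d1 by simp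
  then show ?thesis using eq by linarith
qed

lemma var_bound:
  fixes a r y :: real
  assumes "0 < a" "a < 1" "0 < r" "r < 1" "0 \<le> y" "y \<le> r"
  shows "Hf a r y - (Gf a y)^2 \<le> (1-a)*(1-r)/((1-a*r)*(1-a*r^2)) * ff a y"
proof -
  have y1: "y \<le> 1" using assms by simp
  have ry: "0 \<le> r*y" "r*y \<le> 1" using assms by (auto intro: mult_le_one)
  have d1: "1 - a*y > 0" "1 - a*(r*y) > 0" using assms one_minus_pos y1 ry by auto
  define A where "A = 1 - a*y"
  define C where "C = 1 - a*r*y"
  have An: "A > 0" "C > 0" using d1 by (auto simp: A_def C_def mult.assoc)
  have eq: "Hf a r y - (Gf a y)^2 = (1-a)*(1-r)*(y*(1-y)/A) / (A*C)"
  proof -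
    have fr: "(1-y)*(1-r*y)/(A*C) - ((1-y)/A)^2 = ((1-y)*(1-r*y)*A - (1-y)^2*C)/(A^2*C)"
      using An by (simp add: field_simps power2_eq_square)
    have num: "(1-y)*(1-r*y)*A - (1-y)^2*C = (1-a)*(1-r)*(y*(1-y))"
      unfolding A_def C_def by (simp add: algebra_simps power2_eq_square)
    have "Hf a r y - (Gf a y)^2 = (1-a)*(1-r)*(y*(1-y))/(A^2*C)"
      unfolding Hf_def Gf_def A_def[symmetric] C_def[symmetric] fr num ..
    also have "\<dots> = (1-a)*(1-r)*(y*(1-y)/A) / (A*C)" using An by (simp add: field_simps power2_eq_square)
    finally show ?thesis .
  qed
  have ar: "0 < 1 - a*r" "0 < 1 - a*r^2"
    using one_minus_pos[of a r] one_minus_pos[of a "r^2"] assms by (auto simp: power_le_one)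
  have AC: "(1-a*r)*(1-a*r^2) \<le> A*C"
  proof -
    have "1 - a*r \<le> A" unfolding A_def using assms by (simp add: mult_left_mono)
    moreover have "1 - a*r^2 \<le> C" unfolding C_def using assms
      by (simp add: power2_eq_square mult_left_mono mult.assoc)
    ultimately show ?thesis using ar by (intro mult_mono) auto
  qed
  have nn: "0 \<le> (1-a)*(1-r)*(y*(1-y)/A)" using assms An y1 by simp
  have "(1-a)*(1-r)*(y*(1-y)/A) / (A*C) \<le> (1-a)*(1-r)*(y*(1-y)/A) / ((1-a*r)*(1-a*r^2))"
    using AC nn ar An by (intro divide_left_mono) (auto intro!: mult_pos_pos)
  also have "\<dots> = (1-a)*(1-r)/((1-a*r)*(1-a*r^2)) * ff a y" unfolding ff_def A_def by simp
  finally show ?thesis using eq by simp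
qed

lemma G_diff_sq:
  fixes a r y y0 :: real
  assumes "0 < a" "a < 1" "0 < r" "r < 1" "0 \<le> y" "y \<le> r" "0 \<le> y0" "y0 \<le> 1"
  shows "(Gf a y - Gf a y0)^2 \<le> (1-a)^2/((1-a*r)^2*(1-a*y0)^2) * (y-y0)^2"
proof -
  have y1: "y \<le> 1" using assms by simp
  have d1: "1 - a*y > 0" "1 - a*y0 > 0" using assms one_minus_pos y1 by auto
  define A where "A = 1 - a*y"
  define B where "B = 1 - a*y0"
  have An: "A > 0" "B > 0" using d1 by (auto simp: A_def B_def)
  have eq: "Gf a y - Gf a y0 = (-(1-a)*(y-y0))/(A*B)"
  proof -
    have fr: "(1-y)/A - (1-y0)/B = ((1-y)*B - (1-y0)*A)/(A*B)" using An by (simp add: field_simps)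
    have num: "(1-y)*B - (1-y0)*A = -(1-a)*(y-y0)" unfolding A_def B_def by (simp add: algebra_simps)
    show ?thesis unfolding Gf_def A_def[symmetric] B_def[symmetric] fr num ..
  qed
  have ar: "0 < 1 - a*r" using one_minus_pos[of a r] assms by auto
  have Ar: "1 - a*r \<le> A" unfolding A_def using assms by (simp add: mult_left_mono)
  have "(Gf a y - Gf a y0)^2 = (1-a)^2*(y-y0)^2/(A^2*B^2)" unfolding eq using An
    by (simp add: power_divide power_mult_distrib power2_eq_square algebra_simps)
  also have "\<dots> \<le> (1-a)^2*(y-y0)^2/((1-a*r)^2*B^2)"
  proof (rule divide_left_mono)
    show "(1-a*r)^2*B^2 \<le> A^2*B^2" using Ar ar An by (intro mult_right_mono power_mono) auto
  qed (use ar An in auto)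
  also have "\<dots> = (1-a)^2/((1-a*r)^2*(1-a*y0)^2) * (y-y0)^2" by (simp add: B_def)
  finally show ?thesis .
qed

lemma G_range:
  fixes a y :: real assumes "0 < a" "a < 1" "0 \<le> y" "y \<le> 1"
  shows "0 \<le> Gf a y" "Gf a y \<le> 1"
proof -
  have d: "1 - a*y > 0" using one_minus_pos assms by auto
  show "0 \<le> Gf a y" unfolding Gf_def using d assms by simp
  have "1 - y \<le> 1 - a*y" using assms by (simp add: mult_left_le_one_le)
  then show "Gf a y \<le> 1" unfolding Gf_def using d by simp
qed

lemma H_range:
  fixes a r y :: real assumes "0 < a" "a < 1" "0 < r" "r < 1" "0 \<le> y" "y \<le> 1"
  shows "0 \<le> Hf a r y" "Hf a r y \<le> 1"
proof -
  have ry: "0 \<le> r*y" "r*y \<le> 1" using assms by (auto intro: mult_le_one)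
  have d: "1 - a*y > 0" "1 - a*(r*y) > 0" using one_minus_pos assms ry by auto
  have e: "Hf a r y = Gf a y * Gf a (r*y)" unfolding Hf_def Gf_def by (simp add: mult.assoc)
  show "0 \<le> Hf a r y" unfolding e using G_range[OF assms(1,2,5,6)] G_range[OF assms(1,2) ry] by simp
  show "Hf a r y \<le> 1" unfolding e using G_range[OF assms(1,2,5,6)] G_range[OF assms(1,2) ry]
    by (simp add: mult_le_one)
qed

lemma termwise:
  fixes a r y y0 c x :: real
  assumes a: "0 < a" "a < 1" and r: "0 < r" "r < 1" and y: "0 \<le> y" "y \<le> r" and y0: "0 \<le> y0" "y0 \<le> r"
    and c: "0 \<le> c" and S0: "0 \<le> c * Gf a y0 - x"
  shows "c^2 * Hf a r y - 2*x*c*Gf a y + x^2 \<le>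
     c^2*((1-a)*(1-r)/((1-a*r)*(1-a*r^2)))*(ff a y0 + (1 - 2*y0 + a*y0^2)/(1-a*y0)^2*(y-y0))
     + (c * Gf a y0 - x)^2 + 2*(c * Gf a y0 - x)*c*(-((1-a)/(1-a*y0)^2))*(y-y0)
     + c^2*((1-a)^2/((1-a*r)^2*(1-a*y0)^2))*(y-y0)^2"
proof -
  define S where "S = c * Gf a y0 - x"
  define K where "K = (1-a)*(1-r)/((1-a*r)*(1-a*r^2))"
  define G where "G = Gf a y"
  define G0 where "G0 = Gf a y0"
  define f1 where "f1 = (1 - 2*y0 + a*y0^2)/(1-a*y0)^2"
  define G1 where "G1 = -((1-a)/(1-a*y0)^2)"
  define D where "D = (1-a)^2/((1-a*r)^2*(1-a*y0)^2)"
  define H where "H = Hf a r y"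
  define F0 where "F0 = ff a y0"
  have y1: "y \<le> 1" "y0 \<le> 1" using y y0 r by auto
  have ar: "0 < 1 - a*r" "0 < 1 - a*r^2"
    using one_minus_pos[of a r] one_minus_pos[of a "r^2"] a r by (auto simp: power_le_one)
  have K0: "K \<ge> 0" unfolding K_def using a r ar by simp
  have 1: "c^2 * H - 2*x*c*G + x^2 = c^2*(H - G^2) + (S^2 + 2*S*c*(G - G0) + c^2*(G-G0)^2)"
    unfolding S_def G0_def by (simp add: algebra_simps power2_eq_square)
  have 2: "c^2*(H - G^2) \<le> c^2*K*(F0 + f1*(y-y0))"
  proof -
    have "H - G^2 \<le> K * ff a y" unfolding G_def K_def H_def using var_bound[OF a r y] .
    also have "\<dots> \<le> K*(F0 + f1*(y-y0))" unfolding F0_def f1_def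
      using f_tangent[OF a y(1) y1(1) y0(1) y1(2)] K0 by (intro mult_left_mono) auto
    finally show ?thesis by (simp add: mult.assoc mult_left_mono)
  qed
  have 4: "2*S*c*(G - G0) \<le> 2*S*c*G1*(y-y0)"
  proof -
    have "G - G0 \<le> G1*(y-y0)" unfolding G_def G0_def G1_def
      using G_tangent[OF a y(1) y1(1) y0(1) y1(2)] by simp
    moreover have "0 \<le> 2*S*c" using S0 c S_def by simp
    ultimately have "(2*S*c)*(G - G0) \<le> (2*S*c)*(G1*(y-y0))" by (rule mult_left_mono)
    then show ?thesis by (simp add: mult.assoc)
  qed
  have 5: "c^2*(G-G0)^2 \<le> c^2*D*(y-y0)^2"
  proof -
    have "(G-G0)^2 \<le> D*(y-y0)^2" unfolding G_def G0_def D_def using G_diff_sq[OF a r y y0(1) y1(2)] .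
    then have "c^2*(G-G0)^2 \<le> c^2*(D*(y-y0)^2)" by (rule mult_left_mono) simp
    then show ?thesis by (simp add: mult.assoc)
  qed
  have "c^2 * H - 2*x*c*G + x^2 \<le> c^2*K*(F0 + f1*(y-y0)) + S^2 + 2*S*c*G1*(y-y0) + c^2*D*(y-y0)^2"
    using 1 2 4 5 by linarith
  then show ?thesis unfolding S_def K_def G_def G0_def f1_def G1_def D_def H_def F0_def .
qed

definition Pk :: "real \<Rightarrow> nat \<Rightarrow> real \<Rightarrow> nat \<Rightarrow> real" where "Pk r n x k = qb r (n+k) k * x^k * qp r x (Suc n)"
definition a :: "real \<Rightarrow> nat \<Rightarrow> real" where "a r n = r^(n+1)"

context
  fixes p r :: real and n :: nat and x :: real
  assumes p: "0 < p" and r: "0 < r" "r < 1" and n: "n \<ge> 1" and x: "0 \<le> x" "x < 1"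
begin


lemma Pk_nonneg: "Pk r n x k \<ge> 0"
  unfolding Pk_def using qb_nonneg[OF r] qp_pos[of r x] r x by (intro mult_nonneg_nonneg) (auto intro: less_imp_le)

lemma rmx: "0 \<le> r^m * x" "r^m * x < 1"
proof -
  show "0 \<le> r^m * x" using r x by simp
  have "r^m \<le> 1" using r by (simp add: power_le_one)
  then have "r^m * x \<le> x" using x r by (intro mult_left_le_one_le) auto
  then show "r^m * x < 1" using x by simp
qed

lemma mom_gen: "(\<lambda>k. Pk r n x k * (r^m)^k) sums (qp r x (Suc n) / qp r (r^m * x) (Suc n))"
proof -
  have "(\<lambda>k. qb r (n+k) k * (r^m * x)^k) sums (1 / qp r (r^m*x) (Suc n))"
    using negbin[OF r rmx(1) rmx(2)] .
  then have "(\<lambda>k. qp r x (Suc n) * (qb r (n+k) k * (r^m * x)^k)) sums (qp r x (Suc n) * (1 / qp r (r^m*x) (Suc n)))"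
    by (rule sums_mult)
  then show ?thesis unfolding Pk_def by (simp add: power_mult_distrib mult_ac)
qed

lemma mom0: "Pk r n x sums 1"
proof -
  have "qp r x (Suc n) > 0" using qp_pos[of r x] r x by simp
  then show ?thesis using mom_gen[of 0] by simp
qed


lemma a_props: "0 < a r n" "a r n < 1" "a r n \<le> r"
proof -
  show "0 < a r n" using r by (simp add: a_def)
  show "a r n < 1" unfolding a_def using r power_less_one_iff[of r "n+1"] by linarith
  have "r^(n+1) \<le> r^1" using r by (intro power_decreasing) auto
  then show "a r n \<le> r" by (simp add: a_def)
qed

lemma mom1: "(\<lambda>k. Pk r n x k * r^(k+1)) sums (r * (1-x) / (1 - a r n*x))"
proof -
  have e: "qp r x (Suc n) / qp r (r*x) (Suc n) = (1-x)/(1 - a r n*x)"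
  proof -
    have A: "qp r x (Suc n) = (1-x) * qp r (r*x) n" by (rule qp_Suc_shift)
    have B: "qp r (r*x) (Suc n) = qp r (r*x) n * (1 - a r n*x)" unfolding qp_Suc a_def by (simp add: mult_ac)
    have "qp r (r*x) n > 0" using qp_pos[of r "r*x"] r rmx[of 1] by simp
    then show ?thesis unfolding A B by simp
  qed
  have "(\<lambda>k. r * (Pk r n x k * r^k)) sums (r * ((1-x)/(1-a r n*x)))"
    using sums_mult[OF mom_gen[of 1], of r] e by simp
  then show ?thesis by (simp add: mult_ac)
qed

lemma mom2: "(\<lambda>k. Pk r n x k * (r^(k+1))^2) sums (r^2 * (1-x) * (1 - r*x) / ((1 - a r n*x) * (1 - a r n*r*x)))"
proof -
  have e: "qp r x (Suc n) / qp r (r^2*x) (Suc n) = (1-x)*(1-r*x)/((1 - r^(n+1)*x) * (1 - r^(n+1)*r*x))"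
  proof -
    obtain n' where n': "n = Suc n'" using n by (cases n) auto
    have A: "qp r x (Suc n) = (1-x) * ((1-r*x) * qp r (r^2*x) n')"
      unfolding n' qp_Suc_shift by (simp add: power2_eq_square mult_ac)
    have B: "qp r (r^2*x) (Suc n) = qp r (r^2*x) n' * (1 - r^(n+1)*x) * (1 - r^(n+1)*r*x)"
      unfolding n' qp_Suc by (simp add: power2_eq_square mult_ac)
    have "qp r (r^2*x) n' > 0" using qp_pos[of r "r^2*x"] r rmx[of 2] by simp
    then show ?thesis unfolding A B by simp
  qed
  have "(\<lambda>k. r^2 * (Pk r n x k * (r^2)^k)) sums (r^2 * ((1-x)*(1-r*x)/((1 - r^(n+1)*x) * (1 - r^(n+1)*r*x))))"
    using sums_mult[OF mom_gen[of 2], of "r^2"] e by simp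
  moreover have "(\<lambda>k. r^2 * (Pk r n x k * (r^2)^k)) = (\<lambda>k. Pk r n x k * (r^(k+1))^2)"
    by (rule ext) (simp add: power_mult_distrib power_add power_mult[symmetric] mult_ac flip: power_mult)
  ultimately show ?thesis by (simp add: mult_ac a_def)
qed

end

lemma sums_quad:
  fixes P Y :: "nat \<Rightarrow> real"
  assumes "P sums 1" "(\<lambda>k. P k * Y k) sums y0" "(\<lambda>k. P k * (Y k)^2) sums E2"
  shows "(\<lambda>k. P k * (q0 + q1*(Y k - y0) + q2*(Y k - y0)^2)) sums (q0 + q2*(E2 - y0^2))"
proof -
  have s1: "(\<lambda>k. (q0 - q1*y0 + q2*y0^2) * P k + (q1 - 2*q2*y0) * (P k * Y k) + q2 * (P k * (Y k)^2))
     sums ((q0 - q1*y0 + q2*y0^2) * 1 + (q1 - 2*q2*y0) * y0 + q2 * E2)"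
    by (intro sums_add sums_mult assms)
  have e1: "(\<lambda>k. (q0 - q1*y0 + q2*y0^2) * P k + (q1 - 2*q2*y0) * (P k * Y k) + q2 * (P k * (Y k)^2))
     = (\<lambda>k. P k * (q0 + q1*(Y k - y0) + q2*(Y k - y0)^2))"
    by (rule ext) (simp add: algebra_simps power2_eq_square)
  have e2: "(q0 - q1*y0 + q2*y0^2) * 1 + (q1 - 2*q2*y0) * y0 + q2 * E2 = q0 + q2*(E2 - y0^2)"
    by (simp add: algebra_simps power2_eq_square)
  show ?thesis using s1 unfolding e1 e2 .
qed

context
  fixes p r :: real and n :: nat and x :: real
  assumes p: "0 < p" "p \<le> 1" and r: "0 < r" "r < 1" and n: "n \<ge> 1" and x: "0 \<le> x" "x < 1"
begin


lemma M_op_poly: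
  assumes S: "(\<lambda>k. Pk r n x k * (\<alpha> + \<beta>/p * Gf (a r n) (r^(k+1)) + \<gamma>/p^2 * Hf (a r n) r (r^(k+1)))) sums S"
  shows "M_op p (r*p) n (\<lambda>t. \<alpha> + \<beta>*t + \<gamma>*t^2) x = S"
proof -
  define Mt where "Mt k = m_basis p (r*p) n k x * (1/(p*(r*p))^k) * pq_integral p (r*p) 1 (\<lambda>t. b_basis p (r*p) n k t * (\<alpha> + \<beta>*t + \<gamma>*t^2))" for k
  have qpos: "qi r (n+1) > 0" using qi_pos[OF r] by simp
  have tm: "Mt k = Pk r n x k * (\<alpha> + \<beta>/p * Gf (a r n) (r^(k+1)) + \<gamma>/p^2 * Hf (a r n) r (r^(k+1))) / qi r (n+1)" for k
    using term_poly[OF p(1) r n, of k x \<alpha> \<beta> \<gamma>] qpos unfolding Mt_def Pk_def a_def by (simp add: field_simps)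
  have "Mt sums (S / qi r (n+1))" unfolding tm by (rule sums_divide[OF S])
  then have sm: "suminf Mt = S / qi r (n+1)" by (simp add: sums_iff)
  have x1: "x \<noteq> 1" using x by simp
  have "M_op p (r*p) n (\<lambda>t. \<alpha> + \<beta>*t + \<gamma>*t^2) x = pq_int p (r*p) (n+1) / p^n * suminf Mt"
    unfolding M_op_def Mt_def using x1 by simp
  also have "\<dots> = S" unfolding sm pq_int_conv[OF p(1) r] using qpos p by simp
  finally show ?thesis .
qed

definition "y0 = r*(1-x)/(1 - a r n * x)"

lemma ax_pos: "1 - a r n * x > 0" "1 - a r n * r * x > 0"
proof -
  have "a r n * x \<le> x" using a_props[OF p(1) r n x] x by (simp add: mult_left_le_one_le)
  then show "1 - a r n * x > 0" using x by simp
  have "a r n * r \<le> 1" using a_props[OF p(1) r n x] r by (simp add: mult_le_one)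
  then have "a r n * r * x \<le> x" using a_props[OF p(1) r n x] x r by (simp add: mult_left_le_one_le)
  then show "1 - a r n * r * x > 0" using x by simp
qed

lemma y0_range: "0 \<le> y0" "y0 \<le> r"
proof -
  show "0 \<le> y0" unfolding y0_def using ax_pos r x by simp
  have "1 - x \<le> 1 - a r n * x" using a_props[OF p(1) r n x] x by (simp add: mult_left_le_one_le)
  then have "(1-x)/(1 - a r n * x) \<le> 1" using ax_pos by simp
  then have "r*((1-x)/(1 - a r n * x)) \<le> r*1" using r by (intro mult_left_mono) auto
  then show "y0 \<le> r" unfolding y0_def by simp
qed

lemma yk_range: "0 \<le> r^(k+1)" "r^(k+1) \<le> r"
proof -
  show "0 \<le> r^(k+1)" using r by simp
  have "r^(k+1) \<le> r^1" using r by (intro power_decreasing) auto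
  then show "r^(k+1) \<le> r" by simp
qed

lemma G0_ge_x: "Gf (a r n) y0 \<ge> x"
proof -
  define A where "A = a r n"
  have A: "0 < A" "A < 1" "A \<le> r" using a_props[OF p(1) r n x] by (auto simp: A_def)
  have d: "1 - A*x > 0" using ax_pos A_def by simp
  have d2: "1 - A*x - A*r*(1-x) > 0"
  proof -
    have "1 - A*y0 > 0" using one_minus_pos[of A y0] A y0_range r by auto
    moreover have "1 - A*y0 = (1 - A*x - A*r*(1-x))/(1 - A*x)" unfolding y0_def A_def[symmetric] using d
      by (simp add: field_simps)
    ultimately show ?thesis using d by (simp add: divide_pos_pos zero_less_divide_iff)
  qed
  have G0: "Gf A y0 = (1 - A*x - r*(1-x))/(1 - A*x - A*r*(1-x))"
  proof -
    have e1: "1 - y0 = (1 - A*x - r*(1-x))/(1-A*x)" unfolding y0_def A_def[symmetric] using d by (simp add: field_simps)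
    have e2: "1 - A*y0 = (1 - A*x - A*r*(1-x))/(1-A*x)" unfolding y0_def A_def[symmetric] using d by (simp add: field_simps)
    show ?thesis unfolding Gf_def e1 e2 using d by simp
  qed
  have "x * (1 - A*x - A*r*(1-x)) \<le> 1 - A*x - r*(1-x)"
  proof -
    have "1 - A*x - r*(1-x) - x * (1 - A*x - A*r*(1-x)) = (1-x)*(1-r)*(1-A*x)" by (simp add: algebra_simps)
    moreover have "(1-x)*(1-r)*(1-A*x) \<ge> 0" using x r d by simp
    ultimately show ?thesis by linarith
  qed
  then show ?thesis unfolding A_def[symmetric] G0 using d2 by (simp add: pos_le_divide_eq)
qed

lemma S0_nonneg: "1/p * Gf (a r n) y0 - x \<ge> 0"
proof -
  have "1/p \<ge> 1" using p by simp
  moreover have "Gf (a r n) y0 \<ge> 0" using G_range[of "a r n" y0] a_props[OF p(1) r n x] y0_range r by auto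
  ultimately have "Gf (a r n) y0 * 1 \<le> Gf (a r n) y0 * (1/p)" by (intro mult_left_mono) auto
  then have "1/p * Gf (a r n) y0 \<ge> Gf (a r n) y0" by simp
  then show ?thesis using G0_ge_x by linarith
qed

lemma bound1: "M_op p (r*p) n (\<lambda>t. t - x) x \<le> 1/p * Gf (a r n) y0 - x"
proof -
  define A where "A = a r n"
  have A: "0 < A" "A < 1" "A \<le> r" using a_props[OF p(1) r n x] by (auto simp: A_def)
  define G1 where "G1 = -((1-A)/(1-A*y0)^2)"
  define Psi where "Psi k = -x + 1/p * Gf A (r^(k+1)) + 0/p^2 * Hf A r (r^(k+1))" for k
  define Q where "Q k = (1/p * Gf A y0 - x) + (1/p*G1)*(r^(k+1) - y0) + 0*(r^(k+1) - y0)^2" for k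
  have y1: "y0 \<le> 1" using y0_range r by simp
  have QS: "(\<lambda>k. Pk r n x k * Q k) sums (1/p * Gf A y0 - x + 0*(r^2 * (1-x) * (1 - r*x) / ((1 - A*x) * (1 - A*r*x)) - y0^2))"
    unfolding Q_def A_def using sums_quad[OF mom0[OF p(1) r n x] _ mom2[OF p(1) r n x]] mom1[OF p(1) r n x]
    unfolding y0_def by blast
  have le: "Pk r n x k * Psi k \<le> Pk r n x k * Q k" for k
  proof (rule mult_left_mono)
    have yk: "r^(k+1) \<le> 1" using yk_range(2)[of k] r by linarith
    have "Gf A (r^(k+1)) \<le> Gf A y0 + G1 * (r^(k+1) - y0)"
      using G_tangent[OF A(1,2) yk_range(1) yk y0_range(1) y1] unfolding G1_def by simp
    then have "1/p * Gf A (r^(k+1)) \<le> 1/p * (Gf A y0 + G1 * (r^(k+1) - y0))" using p by (intro mult_left_mono) auto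
    then show "Psi k \<le> Q k" unfolding Psi_def Q_def by (simp add: algebra_simps)
  qed (rule Pk_nonneg[OF p(1) r n x])
  have sumQ: "summable (\<lambda>k. Pk r n x k * Q k)" using QS by (simp add: sums_iff)
  have sumP: "summable (\<lambda>k. Pk r n x k * Psi k)"
  proof (rule summable_comparison_test)
    show "summable (\<lambda>k. Pk r n x k * (x + 1/p))" using mom0[OF p(1) r n x] by (intro summable_mult2) (simp add: sums_iff)
    show "\<exists>N. \<forall>k\<ge>N. norm (Pk r n x k * Psi k) \<le> Pk r n x k * (x + 1/p)"
    proof (intro exI allI impI)
      fix k :: nat
      have yk: "r^(k+1) \<le> 1" using yk_range(2)[of k] r by linarith
      have g: "0 \<le> Gf A (r^(k+1))" "Gf A (r^(k+1)) \<le> 1" using G_range[OF A(1,2) yk_range(1) yk] by auto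
      have "\<bar>Psi k\<bar> \<le> x + 1/p"
      proof -
        have "0 \<le> 1/p * Gf A (r^(k+1))" "1/p * Gf A (r^(k+1)) \<le> 1/p" using g p by (auto simp: mult_le_cancel_left1 divide_le_eq)
        then show ?thesis unfolding Psi_def using x by (simp add: abs_le_iff)
      qed
      then show "norm (Pk r n x k * Psi k) \<le> Pk r n x k * (x + 1/p)"
        using Pk_nonneg[OF p(1) r n x, of k] by (simp add: abs_mult mult_left_mono)
    qed
  qed
  have "M_op p (r*p) n (\<lambda>t. t - x) x = M_op p (r*p) n (\<lambda>t. -x + 1*t + 0*t^2) x" by simp
  also have "\<dots> = suminf (\<lambda>k. Pk r n x k * Psi k)"
    by (rule M_op_poly) (use sumP in \<open>simp add: Psi_def A_def summable_sums\<close>)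
  also have "\<dots> \<le> suminf (\<lambda>k. Pk r n x k * Q k)" by (rule suminf_le[OF le sumP sumQ])
  also have "\<dots> = 1/p * Gf A y0 - x" using QS by (simp add: sums_iff)
  finally show ?thesis unfolding A_def .
qed

lemma bound2: "M_op p (r*p) n (\<lambda>t. (t - x)^2) x \<le>
   (1/p)^2*((1-a r n)*(1-r)/((1-a r n*r)*(1-a r n*r^2)))*ff (a r n) y0 + (1/p * Gf (a r n) y0 - x)^2
   + (1/p)^2*((1-a r n)^2/((1-a r n*r)^2*(1-a r n*y0)^2))*(r^2 * (1-x) * (1 - r*x) / ((1 - a r n*x) * (1 - a r n*r*x)) - y0^2)"
proof -
  define A where "A = a r n"
  have A: "0 < A" "A < 1" "A \<le> r" using a_props[OF p(1) r n x] by (auto simp: A_def)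
  define c where "c = 1/p"
  have c: "0 \<le> c" using p by (simp add: c_def)
  define S where "S = c * Gf A y0 - x"
  have S0: "0 \<le> S" using S0_nonneg unfolding S_def c_def A_def by simp
  define K where "K = (1-A)*(1-r)/((1-A*r)*(1-A*r^2))"
  define f1 where "f1 = (1 - 2*y0 + A*y0^2)/(1-A*y0)^2"
  define G1 where "G1 = -((1-A)/(1-A*y0)^2)"
  define D where "D = (1-A)^2/((1-A*r)^2*(1-A*y0)^2)"
  define E2 where "E2 = r^2 * (1-x) * (1 - r*x) / ((1 - A*x) * (1 - A*r*x))"
  define Psi where "Psi k = x^2 + (-2*x)/p * Gf A (r^(k+1)) + 1/p^2 * Hf A r (r^(k+1))" for k
  define Q where "Q k = (c^2*K*ff A y0 + S^2) + (c^2*K*f1 + 2*S*c*G1)*(r^(k+1) - y0) + (c^2*D)*(r^(k+1) - y0)^2" for k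
  have y1: "y0 \<le> 1" using y0_range r by simp
  have QS: "(\<lambda>k. Pk r n x k * Q k) sums ((c^2*K*ff A y0 + S^2) + (c^2*D)*(E2 - y0^2))"
    unfolding Q_def E2_def A_def using sums_quad[OF mom0[OF p(1) r n x] _ mom2[OF p(1) r n x]] mom1[OF p(1) r n x]
    unfolding y0_def by blast
  have le: "Pk r n x k * Psi k \<le> Pk r n x k * Q k" for k
  proof (rule mult_left_mono)
    have "c^2 * Hf A r (r^(k+1)) - 2*x*c*Gf A (r^(k+1)) + x^2 \<le>
     c^2*K*(ff A y0 + f1*(r^(k+1)-y0)) + S^2 + 2*S*c*G1*(r^(k+1)-y0) + c^2*D*(r^(k+1)-y0)^2"
      unfolding K_def f1_def S_def G1_def D_def
      by (rule termwise[OF A(1,2) r yk_range y0_range c]) (use S0 S_def in simp)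
    moreover have "Psi k = c^2 * Hf A r (r^(k+1)) - 2*x*c*Gf A (r^(k+1)) + x^2"
      unfolding Psi_def c_def by (simp add: power_divide algebra_simps)
    moreover have "Q k = c^2*K*(ff A y0 + f1*(r^(k+1)-y0)) + S^2 + 2*S*c*G1*(r^(k+1)-y0) + c^2*D*(r^(k+1)-y0)^2"
      unfolding Q_def by (simp add: algebra_simps)
    ultimately show "Psi k \<le> Q k" by simp
  qed (rule Pk_nonneg[OF p(1) r n x])
  have sumQ: "summable (\<lambda>k. Pk r n x k * Q k)" using QS by (simp add: sums_iff)
  have sumP: "summable (\<lambda>k. Pk r n x k * Psi k)"
  proof (rule summable_comparison_test)
    show "summable (\<lambda>k. Pk r n x k * (x^2 + 2*x/p + 1/p^2))" using mom0[OF p(1) r n x] by (intro summable_mult2) (simp add: sums_iff)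
    show "\<exists>N. \<forall>k\<ge>N. norm (Pk r n x k * Psi k) \<le> Pk r n x k * (x^2 + 2*x/p + 1/p^2)"
    proof (intro exI allI impI)
      fix k :: nat
      have yk: "r^(k+1) \<le> 1" using yk_range(2)[of k] r by linarith
      have g: "0 \<le> Gf A (r^(k+1))" "Gf A (r^(k+1)) \<le> 1" using G_range[OF A(1,2) yk_range(1) yk] by auto
      have h: "0 \<le> Hf A r (r^(k+1))" "Hf A r (r^(k+1)) \<le> 1" using H_range[OF A(1,2) r yk_range(1) yk] by auto
      have "\<bar>Psi k\<bar> \<le> x^2 + 2*x/p + 1/p^2"
      proof -
        have xp: "0 \<le> 2*x/p" using x p by simp
        have t1: "0 \<le> 2*x/p * Gf A (r^(k+1))" "2*x/p * Gf A (r^(k+1)) \<le> 2*x/p"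
          using mult_nonneg_nonneg[OF xp g(1)] mult_left_mono[OF g(2) xp] by auto
        have pp: "0 \<le> 1/p^2" using p by simp
        have t2: "0 \<le> 1/p^2 * Hf A r (r^(k+1))" "1/p^2 * Hf A r (r^(k+1)) \<le> 1/p^2"
          using mult_nonneg_nonneg[OF pp h(1)] mult_left_mono[OF h(2) pp] by auto
        have "Psi k = x^2 - 2*x/p * Gf A (r^(k+1)) + 1/p^2 * Hf A r (r^(k+1))" unfolding Psi_def by simp
        moreover have "0 \<le> x^2" by simp
        ultimately show ?thesis using t1 t2 x unfolding abs_le_iff by (intro conjI; linarith)
      qed
      then show "norm (Pk r n x k * Psi k) \<le> Pk r n x k * (x^2 + 2*x/p + 1/p^2)"
        using Pk_nonneg[OF p(1) r n x, of k] by (simp add: abs_mult mult_left_mono)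
    qed
  qed
  have "M_op p (r*p) n (\<lambda>t. (t - x)^2) x = M_op p (r*p) n (\<lambda>t. x^2 + (-2*x)*t + 1*t^2) x"
    by (simp add: power2_eq_square algebra_simps)
  also have "\<dots> = suminf (\<lambda>k. Pk r n x k * Psi k)"
    by (rule M_op_poly) (use sumP in \<open>simp add: Psi_def A_def summable_sums\<close>)
  also have "\<dots> \<le> suminf (\<lambda>k. Pk r n x k * Q k)" by (rule suminf_le[OF le sumP sumQ])
  also have "\<dots> = (c^2*K*ff A y0 + S^2) + (c^2*D)*(E2 - y0^2)" using QS by (simp add: sums_iff)
  finally show ?thesis unfolding c_def K_def S_def D_def E2_def A_def by (simp add: algebra_simps)
qed

end

context
  fixes r :: real
  assumes r: "0 < r" "r < 1"
begin

lemma qi_Suc: "qi r (Suc m) = 1 + r * qi r m"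
  using qi_add[of r 1 m] r by (simp add: qi_def)

lemma qi_ge1: "m \<ge> 1 \<Longrightarrow> qi r m \<ge> 1"
proof (induction m)
  case 0 then show ?case by simp
next
  case (Suc m)
  show ?case
  proof (cases "m = 0")
    case True then show ?thesis using r by (simp add: qi_def)
  next
    case False
    then have "qi r m \<ge> 1" using Suc by simp
    then show ?thesis unfolding qi_Suc using r by simp
  qed
qed

lemma qi_nonneg: "qi r m \<ge> 0"
  using qi_ge1[of m] by (cases m) (auto simp: qi_def)

lemma qi_mono: "m \<le> l \<Longrightarrow> qi r m \<le> qi r l"
proof -
  assume "m \<le> l"
  then obtain d where "l = m + d" by (auto dest: le_Suc_ex)
  then show ?thesis using qi_add[of r m d] r qi_nonneg[of d] by simp
qed

lemma qi_le: "qi r m \<le> real m"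
proof (induction m)
  case 0 then show ?case by (simp add: qi_def)
next
  case (Suc m)
  have "r * qi r m \<le> qi r m" using qi_nonneg[of m] r by (intro mult_left_le_one_le) auto
  then show ?case unfolding qi_Suc using Suc by simp
qed

lemma one_minus_pow: "1 - r^m = (1-r) * qi r m"
  using r by (simp add: qi_def)

lemma ineq_I2:
  assumes "n \<ge> 2"
  shows "r/(qi r (n+2) * qi r (n+3)) + 1/(qi r (n+2))^2 \<le> (1+r)/(r^6 * qi r n * qi r (n-1))"
proof -
  define N0 where "N0 = qi r n"
  define Nm where "Nm = qi r (n-1)"
  define N2 where "N2 = qi r (n+2)"
  define N3 where "N3 = qi r (n+3)"
  have pos: "N0 \<ge> 1" "Nm \<ge> 1" using qi_ge1 assms by (auto simp: N0_def Nm_def)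
  have le: "N0 \<le> N2" "Nm \<le> N2" "Nm \<le> N3" using qi_mono by (auto simp: N0_def Nm_def N2_def N3_def)
  have p2: "N0*Nm > 0" using pos by simp
  have a1: "r/(N2*N3) \<le> r/(N0*Nm)"
    using r pos le by (intro divide_left_mono mult_mono) auto
  have a2: "1/N2^2 \<le> 1/(N0*Nm)"
    using pos le by (auto simp: power2_eq_square intro!: divide_left_mono mult_mono)
  have a3: "(1+r)/(N0*Nm) \<le> (1+r)/(r^6*(N0*Nm))"
  proof (rule divide_left_mono)
    have "r^6 \<le> 1" using r by (simp add: power_le_one)
    then show "r^6*(N0*Nm) \<le> N0*Nm" using p2 r by (intro mult_left_le_one_le) auto
  qed (use r p2 in auto)
  have "r/(N2*N3) + 1/N2^2 \<le> (1+r)/(N0*Nm)" using a1 a2 by (simp add: add_divide_distrib)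
  also have "\<dots> \<le> (1+r)/(r^6*(N0*Nm))" by (rule a3)
  finally show ?thesis unfolding N0_def Nm_def N2_def N3_def by (simp add: mult.assoc)
qed

lemma N3_eq: "qi r (n+3) = 1 + r + r^2 * qi r (n+1)"
proof -
  have e: "n+3 = Suc (Suc (n+1))" by simp
  have "qi r (n+3) = 1 + r*(1 + r*qi r (n+1))" unfolding e qi_Suc ..
  then show ?thesis by (simp add: algebra_simps power2_eq_square)
qed

lemma ineq_I1:
  assumes "n \<ge> 1" "c \<ge> 0"
  shows "c^2*(r/(qi r (n+2) * qi r (n+3)) + r*qi r (n+1)/(qi r (n+2) * qi r (n+3)) + r^2*qi r (n+1)/(qi r (n+2))^2)
         + 2*c*(c-1)/qi r (n+2) \<le> c^2*(1+r)^2/(r^5 * qi r n)"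
proof -
  define N0 where "N0 = qi r n"
  define N1 where "N1 = qi r (n+1)"
  define N2 where "N2 = qi r (n+2)"
  define N3 where "N3 = qi r (n+3)"
  have pos: "N0 \<ge> 1" "N1 \<ge> 1" "N2 \<ge> 1" "N3 \<ge> 1" using qi_ge1 assms by (auto simp: N0_def N1_def N2_def N3_def)
  have le: "N0 \<le> N2" "N1 \<le> N2" using qi_mono by (auto simp: N0_def N1_def N2_def)
  have a: "r/(N2*N3) + r*N1/(N2*N3) \<le> 1/N2"
  proof -
    have "(1-r)*N1 \<le> 1" using one_minus_pow[of "n+1"] r zero_le_power[of r "n+1"] unfolding N1_def by linarith
    moreover have "0 \<le> (1-r)*N1" using r pos by simp
    ultimately have "r*((1-r)*N1) \<le> 1" using r by (rule_tac mult_le_one) auto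
    then have "r*(1+N1) \<le> N3" unfolding N3_def N3_eq N1_def[symmetric] by (simp add: algebra_simps power2_eq_square)
    then have "r*(1+N1)/(N2*N3) \<le> N3/(N2*N3)" using pos by (intro divide_right_mono) auto
    also have "\<dots> = 1/N2" using pos by simp
    finally show ?thesis by (simp add: add_divide_distrib algebra_simps)
  qed
  have b: "r^2*N1/N2^2 \<le> r^2/N2"
  proof -
    have "r^2*N1/N2^2 = (r^2/N2)*(N1/N2)" by (simp add: power2_eq_square)
    also have "\<dots> \<le> (r^2/N2)*1" using pos le by (intro mult_left_mono) auto
    finally show ?thesis by simp
  qed
  have c2: "2*c*(c-1)/N2 \<le> 2*c^2/N2"
    using assms pos by (intro divide_right_mono) (auto simp: power2_eq_square algebra_simps)
  have "c^2*(r/(N2*N3) + r*N1/(N2*N3) + r^2*N1/N2^2) + 2*c*(c-1)/N2 \<le> c^2*(1/N2 + r^2/N2) + 2*c^2/N2"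
    using a b c2 by (intro add_mono mult_left_mono) auto
  also have "\<dots> = c^2*(3 + r^2)/N2" using pos by (simp add: field_simps)
  also have "\<dots> \<le> c^2*(3 + r^2)/N0" using pos le by (intro divide_left_mono) auto
  also have "\<dots> \<le> c^2*(1+r)^2/(r^5*N0)"
  proof -
    have r5: "r^5 \<le> r" "r^5 \<le> 1" "r^7 \<le> r^2"
      using power_decreasing[of 1 5 r] power_decreasing[of 2 7 r] power_le_one[of r 5] r by auto
    have e1: "r^5*(3 + r^2) = 3*r^5 + r^7" by (simp add: algebra_simps flip: power_add)
    have e2: "(1+r)^2 = 1 + 2*r + r^2" by (simp add: algebra_simps power2_eq_square)
    have "r^5*(3 + r^2) \<le> (1+r)^2" unfolding e1 e2 using r5 by linarith
    then have "(3 + r^2) \<le> (1+r)^2/r^5" using r by (simp add: pos_le_divide_eq mult.commute)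
    then have "c^2*(3 + r^2)/N0 \<le> c^2*((1+r)^2/r^5)/N0" using pos by (intro divide_right_mono mult_left_mono) auto
    then show ?thesis by simp
  qed
  finally show ?thesis unfolding N0_def N1_def N2_def N3_def .
qed

lemma ineq_I0:
  assumes n: "n \<ge> 2" and c: "c \<ge> 1"
  shows "c^2*(r*qi r (n+1)/(qi r (n+2) * qi r (n+3)) + r^2*qi r (n+1)/(qi r (n+2))^2) + (c-1)^2
     \<le> 1 - c^2/r^2 + 2*(r+c)*c^n/(r^2*qi r n) + c^2*(1+r)^2*(1-r)/r^5"
proof -
  define N0 where "N0 = qi r n"
  define N1 where "N1 = qi r (n+1)"
  define N2 where "N2 = qi r (n+2)"
  define N3 where "N3 = qi r (n+3)"
  have pos: "N0 \<ge> 1" "N1 \<ge> 1" "N2 \<ge> 1" "N3 \<ge> 1" using qi_ge1 n by (auto simp: N0_def N1_def N2_def N3_def)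
  have le: "N0 \<le> N2" "N1 \<le> N2" "N0 \<le> N3" using qi_mono by (auto simp: N0_def N1_def N2_def N3_def)
  have a: "r*N1/(N2*N3) + r^2*N1/N2^2 \<le> (r + r^2)/N0"
  proof -
    have "r*N1/(N2*N3) = (r/N3)*(N1/N2)" by simp
    also have "\<dots> \<le> (r/N3)*1" using pos le r by (intro mult_left_mono) auto
    also have "\<dots> \<le> r/N0" using pos le r by (simp add: divide_left_mono)
    finally have a1: "r*N1/(N2*N3) \<le> r/N0" .
    have "r^2*N1/N2^2 = (r^2/N2)*(N1/N2)" by (simp add: power2_eq_square)
    also have "\<dots> \<le> (r^2/N2)*1" using pos le by (intro mult_left_mono) auto
    also have "\<dots> \<le> r^2/N0" using pos le by (simp add: divide_left_mono)
    finally have a2: "r^2*N1/N2^2 \<le> r^2/N0" .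
    show ?thesis using a1 a2 by (simp add: add_divide_distrib)
  qed
  have b: "c^2/r^2 - c^2 \<le> c^2*(1+r)^2*(1-r)/r^5"
  proof -
    have r3: "r^3 \<le> 1" using r by (simp add: power_le_one)
    have "(1 - r^2)*r^3 \<le> (1+r)^2*(1-r)"
    proof -
      have "(1 - r^2)*r^3 = (1+r)*(1-r)*r^3" by (simp add: algebra_simps power2_eq_square)
      also have "\<dots> \<le> (1+r)*(1-r)*(1+r)" using r r3 by (intro mult_left_mono) auto
      finally show ?thesis by (simp add: power2_eq_square algebra_simps)
    qed
    then have "(1 - r^2)*r^3/r^5 \<le> (1+r)^2*(1-r)/r^5" using r by (intro divide_right_mono) auto
    moreover have "(1 - r^2)*r^3/r^5 = (1 - r^2)/r^2"
    proof -
      have e5: "r^5 = r^2*r^3" by (simp flip: power_add)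
      show ?thesis unfolding e5 using r by (intro nonzero_mult_divide_mult_cancel_right) simp
    qed
    ultimately have "(1 - r^2)/r^2 \<le> (1+r)^2*(1-r)/r^5" by simp
    then have "c^2*((1 - r^2)/r^2) \<le> c^2*((1+r)^2*(1-r)/r^5)" by (intro mult_left_mono) auto
    moreover have "c^2/r^2 - c^2 = c^2*((1 - r^2)/r^2)" using r by (simp add: field_simps)
    ultimately show ?thesis by simp
  qed
  have d: "c^2*(r + r^2)/N0 + 2*c*(c-1) \<le> 2*(r+c)*c^n/(r^2*N0)"
  proof -
    have cn: "c^2 \<le> c^n" using c n by (intro power_increasing) auto
    have d1: "c^2*r^3*(1+r) \<le> 2*r*c^n"
    proof -
      have r23: "r^2 \<le> 1" "r^3 \<le> 1" using r by (auto simp: power_le_one)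
      have "r^2*(1+r) = r^2 + r^3" by (simp add: algebra_simps power2_eq_square power3_eq_cube)
      then have "r^2*(1+r) \<le> 2" using r23 by linarith
      then have "r*(r^2*(1+r)) \<le> r*2" using r by (intro mult_left_mono) auto
      then have "r^3*(1+r) \<le> 2*r" by (simp add: power2_eq_square power3_eq_cube algebra_simps)
      then have "c^2*(r^3*(1+r)) \<le> c^2*(2*r)" by (intro mult_left_mono) auto
      also have "\<dots> \<le> c^n*(2*r)" using cn r by (intro mult_right_mono) auto
      finally show ?thesis by (simp add: algebra_simps)
    qed
    have d2: "(c-1)*r^2*N0 \<le> c^n"
    proof -
      have "(c-1)*r^2*N0 \<le> (c-1)*N0"
      proof -
        have "r^2 \<le> 1" using r by (simp add: power_le_one)
        moreover have "0 \<le> (c-1)*N0" using c pos by simp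
        ultimately have "((c-1)*N0)*r^2 \<le> (c-1)*N0" using r by (intro mult_right_le_one_le) auto
        then show ?thesis by (simp add: mult_ac)
      qed
      also have "\<dots> \<le> (c-1)*real n" using c qi_le[of n] unfolding N0_def by (intro mult_left_mono) auto
      also have "\<dots> \<le> 1 + real n * (c-1)" by simp
      also have "\<dots> \<le> (1 + (c-1))^n" using c by (intro Bernoulli_inequality) simp
      finally show ?thesis by simp
    qed
    define L where "L = c^2*r^3*(1+r) + 2*c*(c-1)*r^2*N0"
    have LL: "L \<le> 2*(r+c)*c^n"
    proof -
      have "2*c*((c-1)*r^2*N0) \<le> 2*c*c^n" using d2 c by (intro mult_left_mono) auto
      then show ?thesis using d1 unfolding L_def by (simp add: algebra_simps)
    qed
    have rn: "r^2*N0 > 0" using r pos by simp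
    have eq: "c^2*(r + r^2)/N0 + 2*c*(c-1) = L/(r^2*N0)"
    proof -
      have "r^3 = r*r^2" by (simp add: power2_eq_square power3_eq_cube)
      then show ?thesis unfolding L_def using r pos by (simp add: field_simps power2_eq_square)
    qed
    have "L/(r^2*N0) \<le> 2*(r+c)*c^n/(r^2*N0)" using LL rn by (intro divide_right_mono) auto
    then show ?thesis unfolding eq .
  qed
  have "c^2*(r*N1/(N2*N3) + r^2*N1/N2^2) + (c-1)^2 \<le> c^2*((r + r^2)/N0) + (c-1)^2"
    using a by (intro add_right_mono mult_left_mono) auto
  also have "\<dots> = c^2*(r + r^2)/N0 + 2*c*(c-1) + 1 - c^2" by (simp add: power2_eq_square algebra_simps)
  also have "\<dots> \<le> 2*(r+c)*c^n/(r^2*N0) + 1 - c^2" using d by simp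
  also have "\<dots> \<le> 1 - c^2/r^2 + 2*(r+c)*c^n/(r^2*N0) + c^2*(1+r)^2*(1-r)/r^5" using b by simp
  finally show ?thesis unfolding N0_def N1_def N2_def N3_def .
qed

end

lemma absK: "(d::real) \<noteq> 0 \<Longrightarrow> B \<noteq> 0 \<Longrightarrow> C \<noteq> 0 \<Longrightarrow> (d*v)*d/((d*B)*(d*C)) = v/(B*C)"
  by (simp add: field_simps)
lemma absT1: "(U::real) \<noteq> 0 \<Longrightarrow> E \<noteq> 0 \<Longrightarrow> B \<noteq> 0 \<Longrightarrow> C \<noteq> 0 \<Longrightarrow>
   v/(B*C) * ((r*s/U) * (g/E)) = (r*g/(B*C)) * (v*s/(U*E))"
  by (simp add: field_simps)
lemma absT2: "(d::real)\<noteq>0 \<Longrightarrow> B\<noteq>0 \<Longrightarrow> E\<noteq>0 \<Longrightarrow> U\<noteq>0 \<Longrightarrow> W\<noteq>0 \<Longrightarrow>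
   (d*v)^2/((d*B)^2*(d*E/U)^2) * (r^2*x*s*(d*v)*d/(U^2*W)) = (r^2*v*x/B^2)*(v^2*s/(E^2*W))"
  by (simp add: field_simps power2_eq_square)

lemma ff_eq: "ff v y = y * Gf v y" unfolding ff_def Gf_def by simp

context
  fixes p r :: real and n :: nat and x :: real
  assumes p: "0 < p" "p \<le> 1" and r: "0 < r" "r < 1" and n: "n \<ge> 2" and x: "0 \<le> x" "x < 1"
begin

lemma n1: "n \<ge> 1" using n by simp

lemmas y0e = y0_def[OF p r n1 x]

abbreviation "A \<equiv> a r n"
abbreviation "N1 \<equiv> qi r (n+1)"
abbreviation "N2 \<equiv> qi r (n+2)"
abbreviation "N3 \<equiv> qi r (n+3)"

lemma Ne: "(1-r)*N1 = 1 - A" "(1-r)*N2 = 1 - A*r" "(1-r)*N3 = 1 - A*r^2"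
proof -
  show "(1-r)*N1 = 1 - A" using one_minus_pow[OF r, of "n+1"] by (simp add: a_def)
  show "(1-r)*N2 = 1 - A*r" using one_minus_pow[OF r, of "n+2"] by (simp add: a_def mult_ac)
  have "n+3 = (n+1)+2" by simp
  then have "r^(n+3) = r^(n+1)*r^2" by (simp only: power_add)
  then show "(1-r)*N3 = 1 - A*r^2" using one_minus_pow[OF r, of "n+3"] by (simp add: a_def)
qed

lemma N2_eq: "N2 = N1 + A"
proof -
  have "(1-r)*(N1 + A) = (1-r)*N1 + (1-r)*A" by (rule distrib_left)
  also have "\<dots> = (1 - A) + (1-r)*A" unfolding Ne(1) ..
  also have "\<dots> = 1 - A*r" by (simp add: algebra_simps)
  also have "\<dots> = (1-r)*N2" by (rule Ne(2)[symmetric])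
  finally have eq: "(1-r)*N2 = (1-r)*(N1 + A)" by (rule sym)
  have nz: "1 - r \<noteq> 0" using r by simp
  show ?thesis using mult_left_cancel[OF nz] eq by blast
qed

lemma Npos: "N1 \<ge> 1" "N2 \<ge> 1" "N3 \<ge> 1" using qi_ge1[OF r] by auto

lemma Epos: "N2 - A*x \<ge> N1" "N2 - A*x > 0"
proof -
  have "A*x \<le> A" using a_props[OF p(1) r n1 x] x by (simp add: mult_left_le_one_le)
  then show "N2 - A*x \<ge> N1" using N2_eq by simp
  then show "N2 - A*x > 0" using Npos by simp
qed

lemma G0_formula: "Gf A (y0 r n x) = (1 - x + x*N1)/(N2 - A*x)"
proof -
  have d: "1 - A*x > 0" using ax_pos[OF p r n1 x] by simp
  have e1: "1 - y0 r n x = (1-r)*(1 - x + x*N1)/(1-A*x)"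
  proof -
    have "1 - y0 r n x = (1 - A*x - r*(1-x))/(1-A*x)" unfolding y0e using d by (simp add: field_simps)
    also have "1 - A*x - r*(1-x) = (1-r)*(1 - x + x*N1)"
    proof -
      have "(1-r)*(1 - x + x*N1) = (1-r)*(1-x) + x*((1-r)*N1)" by (simp add: algebra_simps)
      also have "\<dots> = (1-r)*(1-x) + x*(1-A)" unfolding Ne(1) ..
      finally show ?thesis by (simp add: algebra_simps)
    qed
    finally show ?thesis .
  qed
  have e2: "1 - A*y0 r n x = (1-r)*(N2 - A*x)/(1-A*x)"
  proof -
    have "1 - A*y0 r n x = (1 - A*x - A*r*(1-x))/(1-A*x)" unfolding y0e using d by (simp add: field_simps)
    also have "1 - A*x - A*r*(1-x) = (1-r)*(N2 - A*x)"
    proof -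
      have "(1-r)*(N2 - A*x) = (1-r)*N2 - (1-r)*A*x" by (simp add: algebra_simps)
      also have "\<dots> = (1 - A*r) - (1-r)*A*x" unfolding Ne(2) ..
      finally show ?thesis by (simp add: algebra_simps)
    qed
    finally show ?thesis .
  qed
  show ?thesis unfolding Gf_def e1 e2 using d r Epos by simp
qed

lemma one_minus_Ay0: "1 - A*y0 r n x = (1-r)*(N2 - A*x)/(1-A*x)"
proof -
  have d: "1 - A*x > 0" using ax_pos[OF p r n1 x] by simp
  have "1 - A*y0 r n x = (1 - A*x - A*r*(1-x))/(1-A*x)" unfolding y0e using d by (simp add: field_simps)
  also have "1 - A*x - A*r*(1-x) = (1-r)*(N2 - A*x)"
  proof -
    have "(1-r)*(N2 - A*x) = (1-r)*N2 - (1-r)*A*x" by (simp add: algebra_simps)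
    also have "\<dots> = (1 - A*r) - (1-r)*A*x" unfolding Ne(2) ..
    finally show ?thesis by (simp add: algebra_simps)
  qed
  finally show ?thesis .
qed

lemma K_eq: "(1-A)*(1-r)/((1-A*r)*(1-A*r^2)) = N1/(N2*N3)"
proof -
  have nz: "1 - r \<noteq> 0" using r by simp
  show ?thesis unfolding Ne[symmetric] by (rule absK) (use nz Npos in auto)
qed

lemma T1: "(1-A)*(1-r)/((1-A*r)*(1-A*r^2)) * ff A (y0 r n x) \<le> r*(1-x+x*N1)/(N2*N3)"
proof -
  define U where "U = 1 - A*x"
  define E where "E = N2 - A*x"
  have U: "U > 0" "1 - x \<le> U" using ax_pos[OF p r n1 x] a_props[OF p(1) r n1 x] x
    by (auto simp: U_def mult_left_le_one_le)
  have E: "E > 0" "N1 \<le> E" using Epos by (auto simp: E_def)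
  have "(1-A)*(1-r)/((1-A*r)*(1-A*r^2)) * ff A (y0 r n x) = (r*(1-x+x*N1)/(N2*N3)) * (N1*(1-x)/(U*E))"
    unfolding K_eq ff_eq G0_formula unfolding y0e U_def[symmetric] E_def[symmetric] by (rule absT1) (use U E Npos in auto)
  also have "\<dots> \<le> (r*(1-x+x*N1)/(N2*N3)) * 1"
  proof (rule mult_left_mono)
    have "N1*(1-x) \<le> E*U" using U E Npos x by (intro mult_mono) auto
    then show "N1*(1-x)/(U*E) \<le> 1" using U E by (simp add: divide_le_eq mult.commute)
    have "0 \<le> 1-x+x*N1" using x Npos by simp
    then show "0 \<le> r*(1-x+x*N1)/(N2*N3)" using r Npos by simp
  qed
  finally show ?thesis by simp
qed

lemma T2: "(1-A)^2/((1-A*r)^2*(1-A*y0 r n x)^2) * (r^2 * (1-x) * (1 - r*x) / ((1 - A*x) * (1 - A*r*x)) - (y0 r n x)^2)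
   \<le> r^2*N1*x/N2^2"
proof -
  define U where "U = 1 - A*x"
  define W where "W = 1 - A*r*x"
  define E where "E = N2 - A*x"
  have U: "U > 0" "1 - x \<le> U" using ax_pos[OF p r n1 x] a_props[OF p(1) r n1 x] x
    by (auto simp: U_def mult_left_le_one_le)
  have W: "W > 0" "1 - x \<le> W"
  proof -
    show "W > 0" using ax_pos[OF p r n1 x] by (simp add: W_def)
    have "A*r \<le> 1" using a_props[OF p(1) r n1 x] r by (simp add: mult_le_one)
    then have "A*r*x \<le> x" using x a_props[OF p(1) r n1 x] r by (simp add: mult_left_le_one_le)
    then show "1 - x \<le> W" by (simp add: W_def)
  qed
  have E: "E > 0" "N1 \<le> E" using Epos by (auto simp: E_def)
  have nz: "1 - r \<noteq> 0" using r by simp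
  have var: "r^2 * (1-x) * (1 - r*x) / (U * W) - (r*(1-x)/U)^2 = r^2*x*(1-x)*((1-r)*N1)*(1-r)/(U^2*W)"
  proof -
    have fr: "r^2 * (1-x) * (1 - r*x) / (U * W) - (r*(1-x)/U)^2 = r^2*(1-x)*((1-r*x)*U - (1-x)*W)/(U^2*W)"
      using U W by (simp add: field_simps power2_eq_square)
    have num: "(1-r*x)*U - (1-x)*W = x*(1-A)*(1-r)" unfolding U_def W_def by (simp add: algebra_simps)
    show ?thesis unfolding fr num Ne(1)[symmetric] by (simp add: algebra_simps)
  qed
  have "(1-A)^2/((1-A*r)^2*(1-A*y0 r n x)^2) * (r^2 * (1-x) * (1 - r*x) / ((1 - A*x) * (1 - A*r*x)) - (y0 r n x)^2)
     = ((1-r)*N1)^2/(((1-r)*N2)^2*((1-r)*E/U)^2) * (r^2*x*(1-x)*((1-r)*N1)*(1-r)/(U^2*W))"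
    unfolding one_minus_Ay0 unfolding y0e U_def[symmetric] W_def[symmetric] E_def[symmetric]
    unfolding var Ne(1)[symmetric] Ne(2)[symmetric] ..
  also have "\<dots> = (r^2*N1*x/N2^2) * (N1^2*(1-x)/(E^2*W))"
    by (rule absT2) (use nz U W E Npos in auto)
  also have "\<dots> \<le> (r^2*N1*x/N2^2) * 1"
  proof (rule mult_left_mono)
    have "N1^2*(1-x) \<le> E^2*W" using U W E Npos x by (intro mult_mono power_mono) auto
    then show "N1^2*(1-x)/(E^2*W) \<le> 1" using W E by (simp add: divide_le_eq mult.commute)
    show "0 \<le> r^2*N1*x/N2^2" using r Npos x by simp
  qed
  finally show ?thesis by simp
qed

lemma T3: "0 \<le> 1/p * Gf A (y0 r n x) - x" "1/p * Gf A (y0 r n x) - x \<le> 1/p*(1-x)/N2 + (1/p - 1)*x"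
proof -
  show "0 \<le> 1/p * Gf A (y0 r n x) - x" using S0_nonneg[OF p r n1 x] .
  define E where "E = N2 - A*x"
  have E: "E > 0" using Epos by (auto simp: E_def)
  have "Gf A (y0 r n x) - x = (1-x)*(1-A*x)/E"
  proof -
    have "Gf A (y0 r n x) - x = (1 - x + x*N1 - x*E)/E" unfolding G0_formula E_def[symmetric] using E by (simp add: field_simps)
    also have "1 - x + x*N1 - x*E = (1-x)*(1-A*x)" unfolding E_def N2_eq by (simp add: algebra_simps)
    finally show ?thesis .
  qed
  also have "\<dots> \<le> (1-x)/N2"
  proof -
    have "A*x*1 \<le> A*x*N2" using Npos a_props[OF p(1) r n1 x] x by (intro mult_left_mono) auto
    then have "(1-A*x)*N2 \<le> E" unfolding E_def by (simp add: algebra_simps)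
    then have "(1-x)*((1-A*x)*N2) \<le> (1-x)*E" using x by (intro mult_left_mono) auto
    then show ?thesis using E Npos by (simp add: field_simps)
  qed
  finally have g: "Gf A (y0 r n x) - x \<le> (1-x)/N2" .
  have "1/p * Gf A (y0 r n x) - x = 1/p * (Gf A (y0 r n x) - x) + (1/p - 1)*x" by (simp add: algebra_simps)
  also have "\<dots> \<le> 1/p * ((1-x)/N2) + (1/p - 1)*x" using mult_left_mono[OF g, of "1/p"] p by simp
  finally show "1/p * Gf A (y0 r n x) - x \<le> 1/p*(1-x)/N2 + (1/p - 1)*x" by simp
qed

end

lemma Bstar_decomp:
  fixes c r x N1 N2 N3 :: real
  assumes "N2 \<noteq> 0" "N3 \<noteq> 0"
  shows "c^2*(r*(1-x+x*N1)/(N2*N3)) + (c*(1-x)/N2 + (c-1)*x)^2 + c^2*(r^2*N1*x/N2^2)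
    = c^2*(1-x)^2*(r/(N2*N3) + 1/N2^2)
      + x*(1-x)*(c^2*(r/(N2*N3) + r*N1/(N2*N3) + r^2*N1/N2^2) + 2*c*(c-1)/N2)
      + x^2*(c^2*(r*N1/(N2*N3) + r^2*N1/N2^2) + (c-1)^2)"
  using assms by (simp add: field_simps power2_eq_square)

lemma convB: "(p::real) \<noteq> 0 \<Longrightarrow> P \<noteq> 0 \<Longrightarrow> r \<noteq> 0 \<Longrightarrow> N \<noteq> 0 \<Longrightarrow>
  2*((r*p)+1)/((r*p)^2*(P*p*N)) = 2*(r+1/p)*(1/(P*p^2))/(r^2*N)"
  by (simp add: field_simps power2_eq_square)
lemma convC: "(p::real) \<noteq> 0 \<Longrightarrow> P \<noteq> 0 \<Longrightarrow> r \<noteq> 0 \<Longrightarrow> N \<noteq> 0 \<Longrightarrow>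
  (p+r*p)^2/(r*p)^5*((P*p^2 - s*P*p^2*x)/(P*p*N))*x = (1/p)^2*(1+r)^2*x*(1-s*x)/(r^5*N)"
  by (simp add: field_simps eval_nat_numeral)
lemma convD: "(p::real) \<noteq> 0 \<Longrightarrow> P \<noteq> 0 \<Longrightarrow> r \<noteq> 0 \<Longrightarrow> N \<noteq> 0 \<Longrightarrow> M \<noteq> 0 \<Longrightarrow>
  p*(p+r*p)/(r*p)^6*((P*p^2 - s*P*p^2*x)*(P*p - t*P*p*x)/((P*p*N)*(P*M))) = (1/p)^2*(1+r)*(1-s*x)*(1-t*x)/(r^6*N*M)"
  by (simp add: field_simps eval_nat_numeral)

context
  fixes p r :: real and n :: nat
  assumes p: "0 < p" "p \<le> 1" and r: "0 < r" "r < 1" and n: "n \<ge> 2"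
begin

lemma R2_conv:
  "x^2*(1 - 1/(r*p)^2 + 2*((r*p)+1)/((r*p)^2*pq_int p (r*p) n))
    + (p+(r*p))^2/(r*p)^5*((p^n - (r*p)^n*x)/pq_int p (r*p) n)*x
    + p*(p+(r*p))/(r*p)^6*((p^n - (r*p)^n*x)*(p^(n-1) - (r*p)^(n-1)*x)/(pq_int p (r*p) n * pq_int p (r*p) (n-1)))
   = x^2*(1 - (1/p)^2/r^2 + 2*(r+1/p)*(1/p)^n/(r^2*qi r n))
     + (1/p)^2*(1+r)^2*x*(1-r^n*x)/(r^5*qi r n)
     + (1/p)^2*(1+r)*(1-r^n*x)*(1-r^(n-1)*x)/(r^6*qi r n*qi r (n-1))"
proof -
  obtain m where m: "n = m + 2" using n by (metis add.commute le_Suc_ex)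
  have h: "n - 1 \<ge> 1" "n \<ge> 1" using n by linarith+
  have q1: "qi r n \<noteq> 0" "qi r (n-1) \<noteq> 0" using qi_ge1[OF r h(2)] qi_ge1[OF r h(1)] by auto
  have e1: "pq_int p (r*p) n = p^(m+1) * qi r n" "pq_int p (r*p) (n-1) = p^m * qi r (n-1)"
    using pq_int_conv[OF p(1) r, of n] pq_int_conv[OF p(1) r, of "n-1"] m by auto
  have e2: "p^n = p^m*p^2" "(r*p)^n = r^n*p^m*p^2" "p^(n-1) = p^m*p" "(r*p)^(n-1) = r^(n-1)*p^m*p"
    using m by (simp_all add: power_add power_mult_distrib mult_ac power2_eq_square)
  have pm: "p^m \<noteq> 0" using p by simp
  have e3: "(1/p)^n = 1/(p^m*p^2)" unfolding m by (simp add: power_add power_divide power2_eq_square)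
  have a: "1/(r*p)^2 = (1/p)^2/r^2" by (simp add: power_mult_distrib power_divide)
  have b: "2*((r*p)+1)/((r*p)^2*(p^m*p*qi r n)) = 2*(r+1/p)*(1/(p^m*p^2))/(r^2*qi r n)"
    by (rule convB) (use p r q1 pm in auto)
  have c: "(p+r*p)^2/(r*p)^5*((p^m*p^2 - r^n*p^m*p^2*x)/(p^m*p*qi r n))*x = (1/p)^2*(1+r)^2*x*(1-r^n*x)/(r^5*qi r n)"
    by (rule convC) (use p r q1 pm in auto)
  have d: "p*(p+r*p)/(r*p)^6*((p^m*p^2 - r^n*p^m*p^2*x)*(p^m*p - r^(n-1)*p^m*p*x)/((p^m*p*qi r n)*(p^m*qi r (n-1))))
     = (1/p)^2*(1+r)*(1-r^n*x)*(1-r^(n-1)*x)/(r^6*qi r n*qi r (n-1))"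
    by (rule convD) (use p r q1 pm in auto)
  have e1': "pq_int p (r*p) n = p^m*p*qi r n" using e1(1) by (simp add: power_add mult_ac)
  show ?thesis unfolding e1' e1(2) e2 e3 a b c d by simp
qed

lemma final2:
  assumes x: "0 \<le> x" "x \<le> 1"
  shows "(1/p)^2*(r*(1-x+x*qi r (n+1))/(qi r (n+2)*qi r (n+3))) + ((1/p)*(1-x)/qi r (n+2) + ((1/p)-1)*x)^2
      + (1/p)^2*(r^2*qi r (n+1)*x/(qi r (n+2))^2)
   \<le> x^2*(1 - (1/p)^2/r^2 + 2*(r+1/p)*(1/p)^n/(r^2*qi r n))
     + (1/p)^2*(1+r)^2*x*(1-r^n*x)/(r^5*qi r n)
     + (1/p)^2*(1+r)*(1-r^n*x)*(1-r^(n-1)*x)/(r^6*qi r n*qi r (n-1))"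
proof -
  define c where "c = 1/p"
  have c: "c \<ge> 1" using p by (simp add: c_def)
  define N0 where "N0 = qi r n"
  define Nm where "Nm = qi r (n-1)"
  define N1 where "N1 = qi r (n+1)"
  define N2 where "N2 = qi r (n+2)"
  define N3 where "N3 = qi r (n+3)"
  have h: "n - 1 \<ge> 1" "n \<ge> 1" using n by linarith+
  have pos: "N0 \<ge> 1" "Nm \<ge> 1" "N2 \<ge> 1" "N3 \<ge> 1"
    using qi_ge1[OF r h(2)] qi_ge1[OF r h(1)] qi_ge1[OF r, of "n+2"] qi_ge1[OF r, of "n+3"]
    by (auto simp: N0_def Nm_def N2_def N3_def)
  define A2 where "A2 = r/(N2*N3) + 1/N2^2"
  define X1 where "X1 = c^2*(r/(N2*N3) + r*N1/(N2*N3) + r^2*N1/N2^2) + 2*c*(c-1)/N2"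
  define X0 where "X0 = c^2*(r*N1/(N2*N3) + r^2*N1/N2^2) + (c-1)^2"
  define C2 where "C2 = (1+r)/(r^6*N0*Nm)"
  define Y1 where "Y1 = c^2*(1+r)^2/(r^5*N0)"
  define Ta where "Ta = 1 - c^2/r^2 + 2*(r+c)*c^n/(r^2*N0)"
  define Y0 where "Y0 = Ta + c^2*(1+r)^2*(1-r)/r^5"
  have dec: "c^2*(r*(1-x+x*N1)/(N2*N3)) + (c*(1-x)/N2 + (c-1)*x)^2 + c^2*(r^2*N1*x/N2^2)
     = c^2*(1-x)^2*A2 + x*(1-x)*X1 + x^2*X0"
    unfolding A2_def X1_def X0_def by (rule Bstar_decomp) (use pos in auto)
  have I2: "A2 \<le> C2" unfolding A2_def C2_def N0_def Nm_def N2_def N3_def using ineq_I2[OF r n] by (simp add: mult.assoc)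
  have I1: "X1 \<le> Y1" unfolding X1_def Y1_def N0_def N1_def N2_def N3_def using ineq_I1[OF r h(2), of c] c by simp
  have I0: "X0 \<le> Y0" unfolding X0_def Y0_def Ta_def N0_def N1_def N2_def N3_def using ineq_I0[OF r n c] by simp
  have x1: "0 \<le> 1 - x" using x by simp
  have step: "c^2*(1-x)^2*A2 + x*(1-x)*X1 + x^2*X0 \<le> c^2*(1-x)^2*C2 + x*(1-x)*Y1 + x^2*Y0"
  proof -
    have "c^2*(1-x)^2*A2 \<le> c^2*(1-x)^2*C2" using I2 by (intro mult_left_mono) auto
    moreover have "x*(1-x)*X1 \<le> x*(1-x)*Y1" using I1 x x1 by (intro mult_left_mono) auto
    moreover have "x^2*X0 \<le> x^2*Y0" using I0 by (intro mult_left_mono) auto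
    ultimately show ?thesis by linarith
  qed
  have Tb: "c^2*(1+r)^2*x*(1-r^n*x)/(r^5*N0) = x*(1-x)*Y1 + x^2*(c^2*(1+r)^2*(1-r)/r^5)"
  proof -
    have e: "1 - r^n*x = (1-x) + x*((1-r)*N0)" unfolding N0_def one_minus_pow[OF r, symmetric] by (simp add: algebra_simps)
    show ?thesis unfolding Y1_def e using pos r by (simp add: field_simps power2_eq_square)
  qed
  have Tc: "c^2*(1-x)^2*C2 \<le> c^2*(1+r)*(1-r^n*x)*(1-r^(n-1)*x)/(r^6*N0*Nm)"
  proof -
    have f1: "1 - x \<le> 1 - r^n*x" "1 - x \<le> 1 - r^(n-1)*x"
      using x r by (auto simp: power_le_one mult_left_le_one_le)
    have "(1-x)^2 \<le> (1-r^n*x)*(1-r^(n-1)*x)" unfolding power2_eq_square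
      using f1 x1 by (intro mult_mono) auto
    then have "c^2*(1+r)/(r^6*N0*Nm)*(1-x)^2 \<le> c^2*(1+r)/(r^6*N0*Nm)*((1-r^n*x)*(1-r^(n-1)*x))"
      using r pos by (intro mult_left_mono) auto
    moreover have "c^2*(1-x)^2*C2 = c^2*(1+r)/(r^6*N0*Nm)*(1-x)^2" unfolding C2_def by simp
    moreover have "c^2*(1+r)/(r^6*N0*Nm)*((1-r^n*x)*(1-r^(n-1)*x)) = c^2*(1+r)*(1-r^n*x)*(1-r^(n-1)*x)/(r^6*N0*Nm)"
      by simp
    ultimately show ?thesis by linarith
  qed
  have "c^2*(r*(1-x+x*N1)/(N2*N3)) + (c*(1-x)/N2 + (c-1)*x)^2 + c^2*(r^2*N1*x/N2^2)
     \<le> x^2*Ta + c^2*(1+r)^2*x*(1-r^n*x)/(r^5*N0) + c^2*(1+r)*(1-r^n*x)*(1-r^(n-1)*x)/(r^6*N0*Nm)"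
    using dec step Tb Tc unfolding Y0_def by (simp add: algebra_simps)
  then show ?thesis unfolding c_def N0_def Nm_def N1_def N2_def N3_def Ta_def by simp
qed

end

lemma convR1: "(p::real) \<noteq> 0 \<Longrightarrow> P \<noteq> 0 \<Longrightarrow> r \<noteq> 0 \<Longrightarrow> N \<noteq> 0 \<Longrightarrow>
  (P*p^2 - s*P*p^2*x)/((r*p)^2*(P*p*N)) = (1/p)*(1-s*x)/(r^2*N)"
  by (simp add: field_simps power2_eq_square)

context
  fixes p r :: real and n :: nat
  assumes p: "0 < p" "p \<le> 1" and r: "0 < r" "r < 1" and n: "n \<ge> 2"
begin

lemma R1_conv:
  "(p^n - (r*p)^n*x)/((r*p)^2*pq_int p (r*p) n) + (1/(r*p) - 1)*x
   = (1/p)*(1-r^n*x)/(r^2*qi r n) + ((1/p)/r - 1)*x"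
proof -
  obtain m where m: "n = m + 2" using n by (metis add.commute le_Suc_ex)
  have h: "n \<ge> 1" using n by linarith
  have q1: "qi r n \<noteq> 0" using qi_ge1[OF r h] by auto
  have e1: "pq_int p (r*p) n = p^m*p*qi r n" using pq_int_conv[OF p(1) r, of n] m by (simp add: power_add mult_ac)
  have e2: "p^n = p^m*p^2" "(r*p)^n = r^n*p^m*p^2"
    using m by (simp_all add: power_add power_mult_distrib mult_ac power2_eq_square)
  have pm: "p^m \<noteq> 0" using p by simp
  have b: "(p^m*p^2 - r^n*p^m*p^2*x)/((r*p)^2*(p^m*p*qi r n)) = (1/p)*(1-r^n*x)/(r^2*qi r n)"
    by (rule convR1) (use p r q1 pm in auto)
  have c: "1/(r*p) = (1/p)/r" by simp
  show ?thesis unfolding e1 e2 b c ..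
qed

lemma final1:
  assumes x: "0 \<le> x" "x \<le> 1"
  shows "(1/p)*(1-x)/qi r (n+2) + ((1/p)-1)*x \<le> (1/p)*(1-r^n*x)/(r^2*qi r n) + ((1/p)/r - 1)*x"
proof -
  have h: "n \<ge> 1" using n by linarith
  have pos: "qi r n \<ge> 1" "qi r n \<le> qi r (n+2)" using qi_ge1[OF r h] qi_mono[OF r, of n "n+2"] by auto
  have c: "1/p \<ge> 1" using p by simp
  have a1: "(1-x)/qi r (n+2) \<le> (1-r^n*x)/(r^2*qi r n)"
  proof -
    have "(1-x)/qi r (n+2) \<le> (1-x)/(r^2*qi r n)"
    proof (rule divide_left_mono)
      have "r^2 \<le> 1" using r by (simp add: power_le_one)
      then have "r^2*qi r n \<le> qi r n" using pos by (intro mult_left_le_one_le) auto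
      then show "r^2*qi r n \<le> qi r (n+2)" using pos by linarith
    qed (use x pos r in auto)
    also have "\<dots> \<le> (1-r^n*x)/(r^2*qi r n)"
    proof (rule divide_right_mono)
      have "r^n*x \<le> x" using x r by (simp add: power_le_one mult_left_le_one_le)
      then show "1 - x \<le> 1 - r^n*x" by simp
    qed (use pos r in auto)
    finally show ?thesis .
  qed
  have a2: "((1/p)-1)*x \<le> ((1/p)/r - 1)*x"
  proof (rule mult_right_mono)
    have "1/p \<le> (1/p)/r" using r p by (simp add: divide_le_eq mult_le_cancel_left1 le_divide_eq)
    then show "1/p - 1 \<le> (1/p)/r - 1" by simp
  qed (use x in auto)
  have "(1/p)*(1-x)/qi r (n+2) = (1/p)*((1-x)/qi r (n+2))" by simp
  also have "\<dots> \<le> (1/p)*((1-r^n*x)/(r^2*qi r n))" using a1 p by (intro mult_left_mono) auto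
  finally show ?thesis using a2 by simp
qed

end

lemma main_r:
  fixes p r :: real and n :: nat
  assumes p: "0 < p" "p \<le> 1" and r: "0 < r" "r < 1" and n: "n \<ge> 2"
  shows "\<forall>x\<in>{0..1}.
     M_op p (r*p) n (\<lambda>t. t - x) x
       \<le> (p ^ n - (r*p) ^ n * x) / ((r*p) ^ 2 * pq_int p (r*p) n) + (1 / (r*p) - 1) * x
   \<and> M_op p (r*p) n (\<lambda>t. (t - x) ^ 2) x
       \<le> x ^ 2 * (1 - 1 / (r*p) ^ 2 + 2 * ((r*p) + 1) / ((r*p) ^ 2 * pq_int p (r*p) n))
         + (p + (r*p)) ^ 2 / (r*p) ^ 5 * ((p ^ n - (r*p) ^ n * x) / pq_int p (r*p) n) * x
         + p * (p + (r*p)) / (r*p) ^ 6 * ((p ^ n - (r*p) ^ n * x) * (p ^ (n - 1) - (r*p) ^ (n - 1) * x)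
             / (pq_int p (r*p) n * pq_int p (r*p) (n - 1)))"
proof
  fix x :: real assume "x \<in> {0..1}"
  then have x: "0 \<le> x" "x \<le> 1" by auto
  have n1: "n \<ge> 1" using n by simp
  define B1 where "B1 = (1/p)*(1-x)/qi r (n+2) + ((1/p)-1)*x"
  define B2 where "B2 = (1/p)^2*(r*(1-x+x*qi r (n+1))/(qi r (n+2)*qi r (n+3))) + ((1/p)*(1-x)/qi r (n+2) + ((1/p)-1)*x)^2
      + (1/p)^2*(r^2*qi r (n+1)*x/(qi r (n+2))^2)"
  have R1: "B1 \<le> (p ^ n - (r*p) ^ n * x) / ((r*p) ^ 2 * pq_int p (r*p) n) + (1 / (r*p) - 1) * x"
    unfolding B1_def R1_conv[OF p r n] using final1[OF p r n x] by simp
  have R2: "B2 \<le> x ^ 2 * (1 - 1 / (r*p) ^ 2 + 2 * ((r*p) + 1) / ((r*p) ^ 2 * pq_int p (r*p) n))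
         + (p + (r*p)) ^ 2 / (r*p) ^ 5 * ((p ^ n - (r*p) ^ n * x) / pq_int p (r*p) n) * x
         + p * (p + (r*p)) / (r*p) ^ 6 * ((p ^ n - (r*p) ^ n * x) * (p ^ (n - 1) - (r*p) ^ (n - 1) * x)
             / (pq_int p (r*p) n * pq_int p (r*p) (n - 1)))"
    unfolding B2_def R2_conv[OF p r n] using final2[OF p r n x] by simp
  show "M_op p (r*p) n (\<lambda>t. t - x) x
       \<le> (p ^ n - (r*p) ^ n * x) / ((r*p) ^ 2 * pq_int p (r*p) n) + (1 / (r*p) - 1) * x
   \<and> M_op p (r*p) n (\<lambda>t. (t - x) ^ 2) x
       \<le> x ^ 2 * (1 - 1 / (r*p) ^ 2 + 2 * ((r*p) + 1) / ((r*p) ^ 2 * pq_int p (r*p) n))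
         + (p + (r*p)) ^ 2 / (r*p) ^ 5 * ((p ^ n - (r*p) ^ n * x) / pq_int p (r*p) n) * x
         + p * (p + (r*p)) / (r*p) ^ 6 * ((p ^ n - (r*p) ^ n * x) * (p ^ (n - 1) - (r*p) ^ (n - 1) * x)
             / (pq_int p (r*p) n * pq_int p (r*p) (n - 1)))"
  proof (cases "x = 1")
    case True
    have m1: "M_op p (r*p) n (\<lambda>t. t - x) x = 0" "M_op p (r*p) n (\<lambda>t. (t - x)^2) x = 0"
      unfolding M_op_def using True by auto
    have b1: "0 \<le> B1" unfolding B1_def using True p by simp
    have q: "qi r (n+1) \<ge> 1" "qi r (n+2) \<ge> 1" "qi r (n+3) \<ge> 1" using qi_ge1[OF r] by auto
    have b2a: "0 \<le> (1/p)^2*(r*(1-x+x*qi r (n+1))/(qi r (n+2)*qi r (n+3)))"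
      using q x r by (intro mult_nonneg_nonneg divide_nonneg_nonneg) auto
    have b2c: "0 \<le> (1/p)^2*(r^2*qi r (n+1)*x/(qi r (n+2))^2)"
      using q x r by (intro mult_nonneg_nonneg divide_nonneg_nonneg) auto
    have b2: "0 \<le> B2" unfolding B2_def using b2a b2c by (simp add: add_nonneg_nonneg)
    show ?thesis unfolding m1 using R1 R2 b1 b2 by linarith
  next
    case False
    then have x1: "x < 1" using x by simp
    have M1: "M_op p (r*p) n (\<lambda>t. t - x) x \<le> B1"
      using bound1[OF p r n1 x(1) x1] T3(2)[OF p r n x(1) x1] unfolding B1_def by simp
    have M2: "M_op p (r*p) n (\<lambda>t. (t - x)^2) x \<le> B2"
    proof -
      define c where "c = 1/p"
      define K where "K = (1-a r n)*(1-r)/((1-a r n*r)*(1-a r n*r^2))"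
      define F where "F = ff (a r n) (y0 r n x)"
      define S where "S = 1/p * Gf (a r n) (y0 r n x) - x"
      define D where "D = (1-a r n)^2/((1-a r n*r)^2*(1-a r n*y0 r n x)^2)"
      define V where "V = r^2 * (1-x) * (1 - r*x) / ((1 - a r n*x) * (1 - a r n*r*x)) - (y0 r n x)^2"
      have b2: "M_op p (r*p) n (\<lambda>t. (t - x)^2) x \<le> c^2*(K*F) + S^2 + c^2*(D*V)"
        using bound2[OF p r n1 x(1) x1] unfolding c_def K_def F_def S_def D_def V_def by (simp add: mult.assoc)
      have t1: "K*F \<le> r*(1-x+x*qi r (n+1))/(qi r (n+2)*qi r (n+3))"
        unfolding K_def F_def using T1[OF p r n x(1) x1] .
      have t2: "D*V \<le> r^2*qi r (n+1)*x/(qi r (n+2))^2"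
        unfolding D_def V_def using T2[OF p r n x(1) x1] .
      have t3: "S^2 \<le> ((1/p)*(1-x)/qi r (n+2) + ((1/p)-1)*x)^2"
        unfolding S_def using T3[OF p r n x(1) x1] by (intro power_mono) auto
      have "c^2*(K*F) \<le> c^2*(r*(1-x+x*qi r (n+1))/(qi r (n+2)*qi r (n+3)))" using t1 by (intro mult_left_mono) auto
      moreover have "c^2*(D*V) \<le> c^2*(r^2*qi r (n+1)*x/(qi r (n+2))^2)" using t2 by (intro mult_left_mono) auto
      ultimately have "c^2*(K*F) + S^2 + c^2*(D*V) \<le> B2" unfolding B2_def c_def using t3 by linarith
      then show ?thesis using b2 by linarith
    qed
    show ?thesis using M1 M2 R1 R2 by linarith
  qed
qed

theorem corollary1:
  fixes p q :: real and n :: nat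
  assumes "0 < q" "q < p" "p \<le> 1" "n \<ge> 2"
  shows "\<forall>x\<in>{0..1}.
     M_op p q n (\<lambda>t. t - x) x
       \<le> (p ^ n - q ^ n * x) / (q ^ 2 * pq_int p q n) + (1 / q - 1) * x
   \<and> M_op p q n (\<lambda>t. (t - x) ^ 2) x
       \<le> x ^ 2 * (1 - 1 / q ^ 2 + 2 * (q + 1) / (q ^ 2 * pq_int p q n))
         + (p + q) ^ 2 / q ^ 5 * ((p ^ n - q ^ n * x) / pq_int p q n) * x
         + p * (p + q) / q ^ 6 * ((p ^ n - q ^ n * x) * (p ^ (n - 1) - q ^ (n - 1) * x)
             / (pq_int p q n * pq_int p q (n - 1)))"
  proof -
  define r where "r = q/p"
  have p: "0 < p" "p \<le> 1" using assms by auto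
  have r: "0 < r" "r < 1" using assms by (auto simp: r_def field_simps)
  have qe: "q = r*p" using assms by (simp add: r_def)
  show ?thesis unfolding qe using main_r[OF p r assms(4)] .
qed

end
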